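(* Let $\mathscr H$ be a separable complex Hilbert space, $d\ge1$ an integer, and let $F=(F_{ij})_{0\le i,j\le d}$ be a matrix of operators in $\mathscr H$, with $F_{00}=K$, $F_{i0}=R_i$, $F_{0j}=N_j$ ($i,j\ge1$), satisfying Hypothesis (C) below. Then: (1) $\mathrm{Dom}(R_k)\supset \mathrm{Dom}(K)\cup\mathrm{Dom}(K^* )$ and $\mathrm{Dom}(N_k^* )\supset\mathrm{Dom}(K)\cup\mathrm{Dom}(K^* )$ for all $k\ge1$. (2) $\mathrm{Dom}(F)=\mathrm{Dom}(K)$; moreover $2\mathrm{Re}\langle Ku|u\rangle=-\sum_{k\ge1}\|R_ku\|^2$ for all $u\in\mathrm{Dom}(K)$ and $2\mathrm{Re}\langle K^*v|v\rangle=-\sum_{k\ge1}\|N_k^*v\|^2$ for all $v\in\mathrm{Dom}(K^* )$. (3) For all $u\in\mathrm{Dom}(K)\cup\mathrm{Dom}(K^* )$ and all $i\ge1$: $N_i^*u=-\sum_{k\ge1}S_{ki}^*R_ku$ and $R_iu=-\sum_{k\ge1}S_{ik}N_k^*u$. (4) For all $u\in\mathrm{Dom}(K)$ and $i=1,\dots,d$: $N_iu=-\sum_{k\ge1}R_k^*S_{ki}u$. (5) For every choice of $u_0,\dots,u_d\in\mathrm{Dom}(F)$ and $v_0,\dots,v_d\in\widetilde D$, \[\sum_{i,j\ge0}\Big(\langle u_i|F_{ij}u_j\rangle+\langle F_{ji}u_i|u_j\rangle+\sum_{k\ge1}\langle F_{ki}u_i|F_{kj}u_j\rangle\Big)=0,\]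 \[\sum_{i,j\ge0}\Big(\langle v_i|F_{ji}^*v_j\rangle+\langle F_{ij}^*v_i|v_j\rangle+\sum_{k\ge1}\langle F_{ik}^*v_i|F_{jk}^*v_j\rangle\Big)=0.\]
   Context: Hypothesis (C): (i) each $F_{ij}$ is a closed operator in $\mathscr H$; set $\mathrm{Dom}(F)=\bigcap_{i,j\ge0}\mathrm{Dom}(F_{ij})$ and $\mathrm{Dom}(F^* )=\bigcap_{i,j\ge0}\mathrm{Dom}(F_{ji}^* )$. (ii) For $1\le i,j\le d$, $F_{ij}=S_{ij}-\delta_{ij}\mathbb 1$, where the $S_{ij}$ are bounded operators with $\sum_{k=1}^dS_{ki}^*S_{kj}=\sum_{k=1}^dS_{ik}S_{jk}^*=\delta_{ij}\mathbb 1$. (iii) There is a dense subspace $D$ which is a core for $K,R_i,N_i$ ($i=1,\dots,d$) and a dense subspace $\widetilde D$ which is a core for $K^*,R_i^*,N_i^*$ ($i=1,\dots,d$). (iv) $\mathrm{Dom}(N_i^* )\supset D\cup\widetilde D$, $\mathrm{Dom}(R_i)\supset D\cup\widetilde D$, $\mathrm{Dom}(N_i)\supset\mathrm{Dom}(K)$ for all $i\ge1$. (v) For all $k,i\ge1$ and $u\in\mathrm{Dom}(K)$: $S_{ki}u\in\mathrm{Dom}(R_k^* )$. (vi) $K$ and $K^*$ are generators of strongly continuous contraction semigroups on $\mathscr H$, and $2\mathrm{Re}\langle Ku|u\rangle=-\sum_{k\ge1}\|R_ku\|^2$ for all $u\in D$, $2\mathrm{Re}\langle K^*v|v\rangle=-\sum_{k\ge1}\|N_k^*v\|^2$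 for all $v\in\widetilde D$. (vii) $N_i^*u=-\sum_{k\ge1}S_{ki}^*R_ku$ for all $u\in D\cup\widetilde D$, $i\ge1$. (viii) There exist a positive self-adjoint operator $C$ on $\mathscr H$ and constants $\delta>0$, $b_1,b_2\ge0$ with $\mathrm{Dom}(C^{1/2})\subset\mathrm{Dom}(F)$ such that, with $C_\epsilon:=C(1+\epsilon C)^{-2}$: (a) for each $\epsilon\in(0,\delta)$ there is a dense subspace $D_\epsilon\subset\widetilde D$ with $C_\epsilon^{1/2}D_\epsilon\subset\widetilde D$ and each $F_{ij}^*C_\epsilon^{1/2}|_{D_\epsilon}$ bounded; (b) for all $\epsilon\in(0,\delta)$ and $u_0,\dots,u_d\in\mathrm{Dom}(F)$, $\sum_{i,j\ge0}\big(\langle u_i|C_\epsilon F_{ij}u_j\rangle+\langle F_{ji}u_i|C_\epsilon u_j\rangle+\sum_{k\ge1}\langle F_{ki}u_i|C_\epsilon F_{kj}u_j\rangle\big)\le\sum_{i\ge0}\big(b_1\langle u_i|C_\epsilon u_i\rangle+b_2\|u_i\|^2\big)$. *)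

theory Defs
  imports "HOL-Analysis.Analysis"
begin

text \<open>The inner product is antilinear in the first argument and linear
in the second (physics convention, as in the paper).\<close>

class complex_inner = real_normed_vector +
  fixes scaleC :: "complex \<Rightarrow> 'a \<Rightarrow> 'a" (infixr "*\<^sub>C" 75)
    and cinner :: "'a \<Rightarrow> 'a \<Rightarrow> complex"
  assumes scaleC_add_right: "a *\<^sub>C (x + y) = a *\<^sub>C x + a *\<^sub>C y"
    and scaleC_add_left: "(a + b) *\<^sub>C x = a *\<^sub>C x + b *\<^sub>C x"
    and scaleC_scaleC: "a *\<^sub>C (b *\<^sub>C x) = (a * b) *\<^sub>C x"
    and scaleC_one: "1 *\<^sub>C x = x"
    and scaleR_scaleC: "scaleR r x = complex_of_real r *\<^sub>C x"
    and cinner_commute: "cinner x y = cnj (cinner y x)"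
    and cinner_add_right: "cinner x (y + z) = cinner x y + cinner x z"
    and cinner_scaleC_right: "cinner x (a *\<^sub>C y) = a * cinner x y"
    and cinner_ge_zero: "0 \<le> Re (cinner x x)"
    and norm_eq_sqrt_cinner: "norm x = sqrt (Re (cinner x x))"

class chilbert_space = complex_inner + complete_space

instantiation complex :: chilbert_space
begin
definition scaleC_complex :: "complex \<Rightarrow> complex \<Rightarrow> complex" where
  "scaleC_complex a x = a * x"
definition cinner_complex :: "complex \<Rightarrow> complex \<Rightarrow> complex" where
  "cinner_complex x y = cnj x * y"
instance
  by standard (auto simp: scaleC_complex_def cinner_complex_def algebra_simps
      complex_norm_square cmod_def power2_eq_square scaleR_conv_of_real)
end

text \<open>An operator in H is a pair (domain, action); values outside the domain are irrelevant.\<close>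

type_synonym 'a linop = "'a set \<times> ('a \<Rightarrow> 'a)"

definition dom :: "'a linop \<Rightarrow> 'a set" where "dom T = fst T"
definition app :: "'a linop \<Rightarrow> 'a \<Rightarrow> 'a" where "app T = snd T"

definition op_eq :: "'a linop \<Rightarrow> 'a linop \<Rightarrow> bool" where
  "op_eq A B \<longleftrightarrow> dom A = dom B \<and> (\<forall>u\<in>dom A. app A u = app B u)"

definition graph :: "'a linop \<Rightarrow> ('a \<times> 'a) set" where
  "graph T = {(u, app T u) | u. u \<in> dom T}"

definition csubspace :: "'a::complex_inner set \<Rightarrow> bool" where
  "csubspace S \<longleftrightarrow> 0 \<in> S \<and> (\<forall>x\<in>S. \<forall>y\<in>S. x + y \<in> S) \<and> (\<forall>a. \<forall>x\<in>S. a *\<^sub>C x \<in> S)"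

definition linear_op :: "'a::complex_inner linop \<Rightarrow> bool" where
  "linear_op T \<longleftrightarrow> csubspace (dom T) \<and>
     (\<forall>x\<in>dom T. \<forall>y\<in>dom T. app T (x + y) = app T x + app T y) \<and>
     (\<forall>a. \<forall>x\<in>dom T. app T (a *\<^sub>C x) = a *\<^sub>C app T x)"

definition closed_op :: "'a::complex_inner linop \<Rightarrow> bool" where
  "closed_op T \<longleftrightarrow> linear_op T \<and> closed (graph T)"

definition adjoint :: "'a::complex_inner linop \<Rightarrow> 'a linop" where
  "adjoint T = ({v. \<exists>w. \<forall>u\<in>dom T. cinner (app T u) v = cinner u w},
                (\<lambda>v. SOME w. \<forall>u\<in>dom T. cinner (app T u) v = cinner u w))"

definition bounded_clinear :: "('a::complex_inner \<Rightarrow> 'a) \<Rightarrow> bool" where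
  "bounded_clinear f \<longleftrightarrow> (\<forall>x y. f (x + y) = f x + f y) \<and> (\<forall>a x. f (a *\<^sub>C x) = a *\<^sub>C f x) \<and>
     (\<exists>M. \<forall>x. norm (f x) \<le> norm x * M)"

definition badj :: "('a::complex_inner \<Rightarrow> 'a) \<Rightarrow> 'a \<Rightarrow> 'a" where
  "badj f = app (adjoint (UNIV, f))"

definition is_core :: "'a::complex_inner set \<Rightarrow> 'a linop \<Rightarrow> bool" where
  "is_core D T \<longleftrightarrow> D \<subseteq> dom T \<and> closure (graph (D, app T)) = graph T"

definition dense_subspace :: "'a::complex_inner set \<Rightarrow> bool" where
  "dense_subspace D \<longleftrightarrow> csubspace D \<and> closure D = UNIV"

definition op_comp :: "'a linop \<Rightarrow> 'a linop \<Rightarrow> 'a linop" where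
  "op_comp A B = ({u \<in> dom B. app B u \<in> dom A}, \<lambda>u. app A (app B u))"

definition contraction_semigroup :: "(real \<Rightarrow> 'a::complex_inner \<Rightarrow> 'a) \<Rightarrow> bool" where
  "contraction_semigroup P \<longleftrightarrow>
     (\<forall>t\<ge>0. bounded_clinear (P t) \<and> (\<forall>x. norm (P t x) \<le> norm x)) \<and>
     P 0 = id \<and> (\<forall>s\<ge>0. \<forall>t\<ge>0. P (s + t) = P s \<circ> P t) \<and>
     (\<forall>x. ((\<lambda>t. P t x) \<longlongrightarrow> x) (at_right 0))"

definition sg_generator :: "(real \<Rightarrow> 'a::complex_inner \<Rightarrow> 'a) \<Rightarrow> 'a linop" where
  "sg_generator P =
     ({x. \<exists>y. ((\<lambda>t. scaleR (1 / t) (P t x - x)) \<longlongrightarrow> y) (at_right 0)},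
      \<lambda>x. Lim (at_right 0) (\<lambda>t. scaleR (1 / t) (P t x - x)))"

definition generates_contraction_sg :: "'a::complex_inner linop \<Rightarrow> bool" where
  "generates_contraction_sg A \<longleftrightarrow> (\<exists>P. contraction_semigroup P \<and> op_eq A (sg_generator P))"

definition densely_defined :: "'a::complex_inner linop \<Rightarrow> bool" where
  "densely_defined T \<longleftrightarrow> closure (dom T) = UNIV"

definition selfadjoint :: "'a::complex_inner linop \<Rightarrow> bool" where
  "selfadjoint T \<longleftrightarrow> linear_op T \<and> densely_defined T \<and> op_eq T (adjoint T)"

definition positive_op :: "'a::complex_inner linop \<Rightarrow> bool" where
  "positive_op T \<longleftrightarrow> (\<forall>u\<in>dom T. 0 \<le> Re (cinner u (app T u)))"

definition pos_selfadjoint :: "'a::complex_inner linop \<Rightarrow> bool" where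
  "pos_selfadjoint T \<longleftrightarrow> selfadjoint T \<and> positive_op T"

definition op_sqrt :: "'a::complex_inner linop \<Rightarrow> 'a linop" where
  "op_sqrt C = (SOME S. pos_selfadjoint S \<and> op_eq (op_comp S S) C)"

definition resolv :: "real \<Rightarrow> 'a::complex_inner linop \<Rightarrow> 'a \<Rightarrow> 'a" where
  "resolv \<epsilon> C u = (THE w. w \<in> dom C \<and> w + scaleR \<epsilon> (app C w) = u)"

definition C_eps :: "real \<Rightarrow> 'a::complex_inner linop \<Rightarrow> 'a linop" where
  "C_eps \<epsilon> C = (UNIV, \<lambda>u. app C (resolv \<epsilon> C (resolv \<epsilon> C u)))"

end

theory Submission
  imports Defs
begin


lemma cinner_add_left: "cinner (x + y) (z::'a::complex_inner) = cinner x z + cinner y z"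
proof -
  have "cinner (x + y) z = cnj (cinner z (x + y))" by (rule cinner_commute)
  also have "\<dots> = cnj (cinner z x) + cnj (cinner z y)" by (simp add: cinner_add_right)
  also have "\<dots> = cinner x z + cinner y z" by (simp only: cinner_commute[of x z] cinner_commute[of y z])
  finally show ?thesis .
qed

lemma scaleC_zero_left[simp]: "0 *\<^sub>C (x::'a::complex_inner) = 0"
  using scaleC_add_left[of 0 0 x] by simp

lemma scaleC_minus1: "(-1) *\<^sub>C (x::'a::complex_inner) = - x"
  using scaleR_scaleC[of "-1" x] by simp

lemma cinner_scaleC_left: "cinner (a *\<^sub>C x) (y::'a::complex_inner) = cnj a * cinner x y"
proof -
  have "cinner (a *\<^sub>C x) y = cnj (cinner y (a *\<^sub>C x))" by (rule cinner_commute)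
  also have "\<dots> = cnj a * cnj (cinner y x)" by (simp add: cinner_scaleC_right)
  also have "\<dots> = cnj a * cinner x y" by (simp only: cinner_commute[of x y])
  finally show ?thesis .
qed

lemma cinner_zero_right[simp]: "cinner (x::'a::complex_inner) 0 = 0"
  using cinner_add_right[of x 0 0] by simp

lemma cinner_zero_left[simp]: "cinner 0 (x::'a::complex_inner) = 0"
  using cinner_add_left[of 0 0 x] by simp

lemma cinner_minus_right: "cinner (x::'a::complex_inner) (- y) = - cinner x y"
proof -
  have "cinner x (- y) + cinner x y = 0"
    using cinner_add_right[of x "-y" y] by simp
  thus ?thesis by (rule add_eq_0_iff2[THEN iffD1])
qed

lemma cinner_minus_left: "cinner (- x) (y::'a::complex_inner) = - cinner x y"
proof -
  have "cinner (- x) y + cinner x y = 0"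
    using cinner_add_left[of "-x" x y] by simp
  thus ?thesis by (rule add_eq_0_iff2[THEN iffD1])
qed

lemma cinner_diff_right: "cinner (x::'a::complex_inner) (y - z) = cinner x y - cinner x z"
  using cinner_add_right[of x y "-z"] by (simp add: cinner_minus_right)

lemma cinner_diff_left: "cinner (x - y) (z::'a::complex_inner) = cinner x z - cinner y z"
  using cinner_add_left[of x "-y" z] by (simp add: cinner_minus_left)

lemma cinner_sum_right: "cinner (x::'a::complex_inner) (\<Sum>i\<in>A. f i) = (\<Sum>i\<in>A. cinner x (f i))"
  by (induction A rule: infinite_finite_induct) (auto simp: cinner_add_right)

lemma cinner_sum_left: "cinner (\<Sum>i\<in>A. f i) (x::'a::complex_inner) = (\<Sum>i\<in>A. cinner (f i) x)"
  by (induction A rule: infinite_finite_induct) (auto simp: cinner_add_left)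

lemma cinner_scaleR_left: "cinner (r *\<^sub>R x) (y::'a::complex_inner) = complex_of_real r * cinner x y"
  by (simp only: scaleR_scaleC[of r x] cinner_scaleC_left) simp

lemma cinner_scaleR_right: "cinner x (r *\<^sub>R (y::'a::complex_inner)) = complex_of_real r * cinner x y"
  by (simp only: scaleR_scaleC[of r y] cinner_scaleC_right)

lemma norm_sq_Re: "(norm x)^2 = Re (cinner x (x::'a::complex_inner))"
  using norm_eq_sqrt_cinner[of x] cinner_ge_zero[of x] by simp

lemma cinner_self: "cinner x (x::'a::complex_inner) = complex_of_real ((norm x)^2)"
proof -
  have "Im (cinner x x) = 0" using cinner_commute[of x x]
    by (simp add: complex_eq_iff)
  moreover have "Re (cinner x x) = (norm x)^2" using norm_eq_sqrt_cinner[of x] cinner_ge_zero[of x] by simp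
  ultimately show ?thesis by (simp add: complex_eq_iff)
qed

lemma norm_sq_add: "(norm (x + y))^2 = (norm x)^2 + (norm (y::'a::complex_inner))^2 + 2 * Re (cinner x y)"
proof -
  have "(norm (x+y))^2 = Re (cinner x x + cinner x y + (cinner y x + cinner y y))"
    by (simp add: norm_sq_Re cinner_add_left cinner_add_right)
  also have "\<dots> = (norm x)^2 + (norm y)^2 + 2 * Re (cinner x y)"
    using cinner_commute[of y x] by (simp add: norm_sq_Re)
  finally show ?thesis .
qed

lemma norm_sq_diff: "(norm (x - y))^2 = (norm x)^2 + (norm (y::'a::complex_inner))^2 - 2 * Re (cinner x y)"
  using norm_sq_add[of x "-y"] by (simp add: cinner_minus_right)

lemma real_cs: "\<bar>Re (cinner x (y::'a::complex_inner))\<bar> \<le> norm x * norm y"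
proof (cases "y = 0")
  case True then show ?thesis by simp
next
  case False
  define r where "r = Re (cinner x y)"
  define n where "n = (norm y)^2"
  define t where "t = - r / n"
  have ny: "n > 0" using False by (simp add: n_def)
  have h0: "0 \<le> (norm (x + t *\<^sub>R y))^2" by simp
  have h1: "(norm (x + t *\<^sub>R y))^2 = (norm x)^2 + t^2 * n + 2 * t * r"
    unfolding norm_sq_add cinner_scaleR_right norm_scaleR n_def r_def
    by (simp add: power_mult_distrib)
  have h2a: "t^2 * n = r^2 / n" using ny unfolding t_def by (simp add: power2_eq_square)
  have h2b: "2 * t * r = - 2 * (r^2 / n)" unfolding t_def by (simp add: power2_eq_square)
  have h2: "t^2 * n + 2 * t * r = - (r^2 / n)" using h2a h2b by simp
  have "r^2 / n \<le> (norm x)^2" using h0 h1 h2 by linarith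
  hence "r^2 \<le> (norm x)^2 * n" using ny by (simp add: pos_divide_le_eq)
  hence "\<bar>r\<bar>^2 \<le> (norm x * norm y)^2" by (simp add: power_mult_distrib n_def)
  hence "\<bar>r\<bar> \<le> norm x * norm y" by (rule power2_le_imp_le) simp
  thus ?thesis unfolding r_def .
qed

lemma norm_scaleC: "norm (a *\<^sub>C (x::'a::complex_inner)) = cmod a * norm x"
proof -
  have c1: "cnj a * a = complex_of_real ((cmod a)^2)" by (metis complex_norm_square mult.commute)
  have "(norm (a *\<^sub>C x))^2 = Re (cinner (a *\<^sub>C x) (a *\<^sub>C x))"
    by (rule norm_sq_Re)
  also have "\<dots> = Re ((cnj a * a) * cinner x x)"
    by (metis cinner_scaleC_left cinner_scaleC_right mult.assoc mult.commute)
  also have "\<dots> = (cmod a)^2 * (norm x)^2"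
    by (simp only: c1 cinner_self of_real_mult[symmetric] Re_complex_of_real)
  finally have "(norm (a *\<^sub>C x))^2 = (cmod a * norm x)^2" by (simp add: power_mult_distrib)
  thus ?thesis by (rule power2_eq_imp_eq) auto
qed

lemma cauchy_schwarz: "cmod (cinner x (y::'a::complex_inner)) \<le> norm x * norm y"
proof (cases "cinner x y = 0")
  case True then show ?thesis by simp
next
  case False
  define z where "z = cinner x y"
  define a where "a = cnj z / complex_of_real (cmod z)"
  have "cmod a = 1" using False by (simp add: a_def z_def norm_divide)
  have cz: "cnj z * z = complex_of_real ((cmod z)^2)" by (metis complex_norm_square mult.commute)
  have nz: "cmod z \<noteq> 0" using False z_def by simp
  have "cinner x (a *\<^sub>C y) = cnj z * z / complex_of_real (cmod z)"
    by (simp only: a_def cinner_scaleC_right z_def[symmetric]) simp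
  also have "\<dots> = complex_of_real (cmod z)" using nz
    by (simp only: cz) (simp add: power2_eq_square)
  finally have "cinner x (a *\<^sub>C y) = complex_of_real (cmod z)" .
  hence "cmod z = Re (cinner x (a *\<^sub>C y))" by simp
  also have "\<dots> \<le> norm x * norm (a *\<^sub>C y)" using real_cs[of x "a *\<^sub>C y"] abs_ge_self[of "Re (cinner x (a *\<^sub>C y))"] by linarith
  also have "\<dots> = norm x * norm y" by (simp add: norm_scaleC \<open>cmod a = 1\<close>)
  finally show ?thesis by (simp add: z_def)
qed

lemma bounded_bilinear_cinner: "bounded_bilinear (cinner :: 'a::complex_inner \<Rightarrow> 'a \<Rightarrow> complex)"
  unfolding bounded_bilinear_def
  by (auto simp: cinner_add_left cinner_add_right cinner_scaleR_left cinner_scaleR_right scaleR_conv_of_real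
      intro!: exI[of _ 1] cauchy_schwarz)

lemma tendsto_cinner[tendsto_intros]:
  "(f \<longlongrightarrow> a) F \<Longrightarrow> (g \<longlongrightarrow> b) F \<Longrightarrow> ((\<lambda>x. cinner (f x) (g x :: 'a::complex_inner)) \<longlongrightarrow> cinner a b) F"
  by (rule bounded_bilinear.tendsto[OF bounded_bilinear_cinner])

lemma cinner_self_eq_0: "cinner x x = 0 \<longleftrightarrow> (x::'a::complex_inner) = 0"
  by (simp add: cinner_self)

lemma dense_orth:
  assumes "closure A = UNIV" "\<forall>v\<in>A. cinner v x = 0"
  shows "(x::'a::complex_inner) = 0"
proof -
  have "x \<in> closure A" using assms by simp
  then obtain s where s: "\<forall>n. s n \<in> A" "s \<longlonglongrightarrow> x" by (meson closure_sequential)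
  have "(\<lambda>n. cinner (s n) x) \<longlonglongrightarrow> cinner x x" by (intro tendsto_intros s)
  moreover have "(\<lambda>n. cinner (s n) x) = (\<lambda>n. 0)" using s assms by auto
  ultimately have "(\<lambda>n. 0::complex) \<longlonglongrightarrow> cinner x x" by simp
  hence "cinner x x = 0" by (simp add: LIMSEQ_const_iff)
  thus ?thesis by (simp add: cinner_self_eq_0)
qed

lemma app_pair[simp]: "app (A, f) = f" by (simp add: app_def)
lemma dom_pair[simp]: "dom (A, f) = A" by (simp add: dom_def)

lemma lipschitz_tendsto:
  assumes "\<And>x y. norm (g x - g y) \<le> M * norm (x - y)" "X \<longlonglongrightarrow> a"
  shows "(\<lambda>n. g (X n)) \<longlonglongrightarrow> g a"
proof (rule LIM_zero_cancel, rule Lim_null_comparison)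
  show "\<forall>\<^sub>F n in sequentially. norm (g (X n) - g a) \<le> M * norm (X n - a)"
    using assms(1) by simp
  have "(\<lambda>n. norm (X n - a)) \<longlonglongrightarrow> 0" using assms(2) by (simp add: LIM_zero tendsto_norm_zero)
  thus "(\<lambda>n. M * norm (X n - a)) \<longlonglongrightarrow> 0" using tendsto_mult_right_zero by blast
qed

lemma csubspace_diff: "csubspace D \<Longrightarrow> x \<in> D \<Longrightarrow> y \<in> D \<Longrightarrow> x - y \<in> D"
  unfolding csubspace_def using scaleC_minus1[of y] by (metis diff_conv_add_uminus)

lemma linear_op_diff:
  assumes "linear_op T" "x \<in> dom T" "y \<in> dom T"
  shows "x - y \<in> dom T" "app T (x - y) = app T x - app T y"
proof -
  have m: "(-1) *\<^sub>C y \<in> dom T" using assms unfolding linear_op_def csubspace_def by blast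
  show "x - y \<in> dom T" using assms csubspace_diff unfolding linear_op_def by blast
  have "app T (x + (-1) *\<^sub>C y) = app T x + app T ((-1) *\<^sub>C y)"
    using assms m unfolding linear_op_def by blast
  also have "app T ((-1) *\<^sub>C y) = (-1) *\<^sub>C app T y" using assms unfolding linear_op_def by blast
  finally show "app T (x - y) = app T x - app T y" by (simp add: scaleC_minus1)
qed

definition diffop :: "'a::complex_inner set \<Rightarrow> 'a linop \<Rightarrow> bool" where
  "diffop D T \<longleftrightarrow> D \<subseteq> dom T \<and> (\<forall>x\<in>D. \<forall>y\<in>D. app T (x - y) = app T x - app T y)"

definition seqclosed :: "'a::complex_inner linop \<Rightarrow> bool" where
  "seqclosed T \<longleftrightarrow> (\<forall>s u w. (\<forall>n. s n \<in> dom T) \<longrightarrow> s \<longlonglongrightarrow> u \<longrightarrow> (\<lambda>n. app T (s n)) \<longlonglongrightarrow> w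
      \<longrightarrow> u \<in> dom T \<and> app T u = w)"

lemma linear_diffop: "linear_op T \<Longrightarrow> D \<subseteq> dom T \<Longrightarrow> diffop D T"
  unfolding diffop_def using linear_op_diff by blast

lemma closed_seqclosed:
  assumes "closed_op T" shows "seqclosed T"
  unfolding seqclosed_def
proof (intro allI impI)
  fix s u w assume s: "\<forall>n. s n \<in> dom T" "s \<longlonglongrightarrow> u" "(\<lambda>n. app T (s n)) \<longlonglongrightarrow> w"
  have "(u, w) \<in> graph T"
  proof (rule closed_sequentially[of _ "\<lambda>n. (s n, app T (s n))"])
    show "closed (graph T)" using assms closed_op_def by blast
    show "\<And>n. (s n, app T (s n)) \<in> graph T" using s unfolding graph_def by blast
    show "(\<lambda>n. (s n, app T (s n))) \<longlonglongrightarrow> (u, w)" using s by (intro tendsto_Pair)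
  qed
  thus "u \<in> dom T \<and> app T u = w" unfolding graph_def by auto
qed

lemma adjoint_char:
  assumes dense: "closure (dom T) = UNIV" and w: "\<forall>u\<in>dom T. cinner (app T u) v = cinner u w"
  shows "v \<in> dom (adjoint T)" "app (adjoint T) v = w"
proof -
  show "v \<in> dom (adjoint T)" using w unfolding adjoint_def dom_def by auto
  have ex: "\<exists>w. \<forall>u\<in>dom T. cinner (app T u) v = cinner u w" using w by blast
  define w' where "w' = (SOME w. \<forall>u\<in>dom T. cinner (app T u) v = cinner u w)"
  have w': "\<forall>u\<in>dom T. cinner (app T u) v = cinner u w'"
    unfolding w'_def by (rule someI_ex[OF ex])
  have "w' - w = 0"
    by (rule dense_orth[OF dense]) (use w w' in \<open>simp add: cinner_diff_right\<close>)
  thus "app (adjoint T) v = w" unfolding adjoint_def w'_def by simp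
qed

lemma adjoint_prop:
  assumes "v \<in> dom (adjoint T)" "u \<in> dom T"
  shows "cinner (app T u) v = cinner u (app (adjoint T) v)"
proof -
  have ex: "\<exists>w. \<forall>u\<in>dom T. cinner (app T u) v = cinner u w"
    using assms unfolding adjoint_def dom_def by auto
  have eq: "app (adjoint T) v = (SOME w. \<forall>u\<in>dom T. cinner (app T u) v = cinner u w)"
    unfolding adjoint_def by simp
  have "\<forall>u\<in>dom T. cinner (app T u) v = cinner u (SOME w. \<forall>u\<in>dom T. cinner (app T u) v = cinner u w)"
    by (rule someI_ex[OF ex])
  from this[folded eq] assms(2) show ?thesis by blast
qed

lemma adjoint_diffop:
  assumes dense: "closure (dom T) = UNIV" and D: "D \<subseteq> dom (adjoint T)"
  shows "diffop D (adjoint T)"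
  unfolding diffop_def
proof (intro conjI ballI D)
  fix x y assume "x \<in> D" "y \<in> D"
  hence xy: "x \<in> dom (adjoint T)" "y \<in> dom (adjoint T)" using D by auto
  hence "\<forall>u\<in>dom T. cinner (app T u) (x - y) = cinner u (app (adjoint T) x - app (adjoint T) y)"
    using adjoint_prop[OF xy(1)] adjoint_prop[OF xy(2)] by (simp add: cinner_diff_right)
  thus "app (adjoint T) (x - y) = app (adjoint T) x - app (adjoint T) y"
    by (rule adjoint_char(2)[OF dense])
qed

lemma adjoint_seqclosed:
  assumes dense: "closure (dom T) = UNIV" shows "seqclosed (adjoint T)"
  unfolding seqclosed_def
proof (intro allI impI)
  fix s v w assume s: "\<forall>n. s n \<in> dom (adjoint T)" "s \<longlonglongrightarrow> v" "(\<lambda>n. app (adjoint T) (s n)) \<longlonglongrightarrow> w"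
  have "\<forall>u\<in>dom T. cinner (app T u) v = cinner u w"
  proof
    fix u assume u: "u \<in> dom T"
    have "(\<lambda>n. cinner (app T u) (s n)) \<longlonglongrightarrow> cinner (app T u) v" using s by (intro tendsto_intros)
    moreover have "(\<lambda>n. cinner (app T u) (s n)) = (\<lambda>n. cinner u (app (adjoint T) (s n)))"
      using s u adjoint_prop by blast
    moreover have "(\<lambda>n. cinner u (app (adjoint T) (s n))) \<longlonglongrightarrow> cinner u w" using s by (intro tendsto_intros)
    ultimately show "cinner (app T u) v = cinner u w" using LIMSEQ_unique by metis
  qed
  thus "v \<in> dom (adjoint T) \<and> app (adjoint T) v = w" using adjoint_char[OF dense] by blast
qed

lemma core_seq:
  assumes "is_core D T" "u \<in> dom T"
  obtains s where "\<forall>n. s n \<in> D" "s \<longlonglongrightarrow> u" "(\<lambda>n. app T (s n)) \<longlonglongrightarrow> app T u"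
proof -
  have "(u, app T u) \<in> closure (graph (D, app T))"
    using assms unfolding is_core_def graph_def by auto
  then obtain p where p: "\<forall>n. p n \<in> graph (D, app T)" "p \<longlonglongrightarrow> (u, app T u)"
    by (meson closure_sequential)
  have "\<forall>n. \<exists>u. p n = (u, app T u) \<and> u \<in> D" using p(1) unfolding graph_def by simp
  hence "\<forall>n. fst (p n) \<in> D \<and> snd (p n) = app T (fst (p n))" by (metis fst_conv snd_conv)
  moreover have "(\<lambda>n. fst (p n)) \<longlonglongrightarrow> u" using tendsto_fst[OF p(2)] by simp
  moreover have "(\<lambda>n. snd (p n)) \<longlonglongrightarrow> app T u" using tendsto_snd[OF p(2)] by simp
  ultimately show ?thesis using that[of "\<lambda>n. fst (p n)"] by simp
qed

lemma parallelogram: "(norm (x - y))^2 = 2 * (norm x)^2 + 2 * (norm (y::'a::complex_inner))^2 - (norm (x + y))^2"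
  using norm_sq_add[of x y] norm_sq_diff[of x y] by linarith

lemma riesz:
  fixes psi :: "'a::chilbert_space \<Rightarrow> complex"
  assumes add: "\<And>x y. psi (x + y) = psi x + psi y"
    and scal: "\<And>a x. psi (a *\<^sub>C x) = a * psi x"
    and bnd: "\<And>x. cmod (psi x) \<le> M * norm x"
  shows "\<exists>w. \<forall>x. psi x = cinner w x"
proof (cases "\<forall>x. psi x = 0")
  case True then show ?thesis by (intro exI[of _ 0]) simp
next
  case False
  then obtain x1 where x1: "psi x1 \<noteq> 0" by blast
  have psi0: "psi 0 = 0" using scal[of 0 0] by simp
  have psiR: "psi (r *\<^sub>R x) = complex_of_real r * psi x" for r x
    by (simp only: scaleR_scaleC[of r x] scal)
  have psim: "psi (x - y) = psi x - psi y" for x y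
  proof -
    have "psi (x - y) + psi y = psi x" using add[of "x - y" y] by simp
    thus ?thesis by (simp add: eq_diff_eq)
  qed
  define A where "A = {x. psi x = 1}"
  have A1: "(1 / psi x1) *\<^sub>C x1 \<in> A" using x1 by (simp add: A_def scal)
  hence Ane: "norm ` A \<noteq> {}" by blast
  have Abdd: "bdd_below (norm ` A)" by (meson bdd_belowI2 norm_ge_zero)
  define d where "d = Inf (norm ` A)"
  have dle: "d \<le> norm z" if "z \<in> A" for z
    unfolding d_def using that Abdd by (simp add: cInf_lower)
  have d0: "0 \<le> d" unfolding d_def using Ane by (auto intro!: cInf_greatest)
  have "\<exists>x\<in>A. (norm x)^2 < d^2 + 1 / (real n + 1)" for n
  proof -
    have "d^2 < d^2 + 1 / (real n + 1)" by (simp add: add_nonneg_pos)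
    hence "d < sqrt (d^2 + 1 / (real n + 1))" by (rule real_less_rsqrt)
    hence "\<exists>x\<in>norm ` A. x < sqrt (d^2 + 1 / (real n + 1))"
      using cInf_less_iff[OF Ane Abdd] d_def by blast
    then obtain x where x: "x \<in> A" "norm x < sqrt (d^2 + 1 / (real n + 1))" by blast
    hence "(norm x)^2 < (sqrt (d^2 + 1 / (real n + 1)))^2"
      by (intro power_strict_mono) auto
    also have "\<dots> = d^2 + 1 / (real n + 1)" by (simp add: add_nonneg_nonneg)
    finally show ?thesis using x by blast
  qed
  then obtain s where s: "\<And>n. s n \<in> A" "\<And>n. (norm (s n))^2 < d^2 + 1 / (real n + 1)"
    by metis
  have sdiff: "(norm (s m - s n))^2 \<le> 2 / (real m + 1) + 2 / (real n + 1)" for m n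
  proof -
    have "(1/2) *\<^sub>R (s m + s n) \<in> A" using s(1)[of m] s(1)[of n]
      by (simp add: A_def psiR add)
    hence "d \<le> norm ((1/2) *\<^sub>R (s m + s n))" by (rule dle)
    hence "2 * d \<le> norm (s m + s n)" by simp
    hence "(2 * d)^2 \<le> (norm (s m + s n))^2" using d0 by (intro power_mono) auto
    thus ?thesis using parallelogram[of "s m" "s n"] s(2)[of m] s(2)[of n]
      by (simp add: power_mult_distrib)
  qed
  have "Cauchy s"
  proof (rule CauchyI)
    fix e :: real assume e: "0 < e"
    obtain N :: nat where N: "4 / e^2 < real N" using reals_Archimedean2 by blast
    show "\<exists>M. \<forall>m\<ge>M. \<forall>n\<ge>M. norm (s m - s n) < e"
    proof (intro exI allI impI)
      fix m n assume mn: "N \<le> m" "N \<le> n"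
      have "2 / (real m + 1) \<le> 2 / (real N + 1)" "2 / (real n + 1) \<le> 2 / (real N + 1)"
        using mn by (auto intro!: divide_left_mono)
      hence "(norm (s m - s n))^2 \<le> 4 / (real N + 1)" using sdiff[of m n] by simp
      also have "\<dots> < e^2"
      proof -
        have e2: "0 < e^2" using e by simp
        have "4 < real N * e^2" using N e2 by (simp add: pos_divide_less_eq)
        moreover have "e^2 * (real N + 1) = real N * e^2 + e^2" by (simp add: algebra_simps)
        ultimately have "4 < e^2 * (real N + 1)" using e2 by linarith
        thus ?thesis by (simp add: divide_less_eq)
      qed
      finally show "norm (s m - s n) < e" by (rule power_less_imp_less_base) (use e in auto)
    qed
  qed
  then obtain x0 where x0: "s \<longlonglongrightarrow> x0" using Cauchy_convergent_iff convergent_def by blast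
  have "(\<lambda>n. psi (s n)) \<longlonglongrightarrow> psi x0"
  proof (rule lipschitz_tendsto[OF _ x0])
    fix x y show "norm (psi x - psi y) \<le> M * norm (x - y)" using bnd[of "x - y"] by (simp add: psim)
  qed
  moreover have "(\<lambda>n. psi (s n)) = (\<lambda>n. 1)" using s(1) by (simp add: A_def)
  ultimately have "(\<lambda>n. 1) \<longlonglongrightarrow> psi x0" by simp
  hence "psi x0 = 1" by (simp add: LIMSEQ_const_iff)
  have x0min: "(norm x0)^2 \<le> (norm z)^2" if "z \<in> A" for z
  proof -
    have "(\<lambda>n. (norm (s n))^2) \<longlonglongrightarrow> (norm x0)^2" using x0 by (intro tendsto_intros)
    moreover have "(\<lambda>n. 1 / (real n + 1)) \<longlonglongrightarrow> 0"
      using LIMSEQ_inverse_real_of_nat by (simp add: inverse_eq_divide add.commute)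
    hence "(\<lambda>n. d^2 + 1 / (real n + 1)) \<longlonglongrightarrow> d^2 + 0"
      by (intro tendsto_intros)
    ultimately have "(norm x0)^2 \<le> d^2 + 0"
      using s(2) by (intro LIMSEQ_le[of "\<lambda>n. (norm (s n))^2" _ "\<lambda>n. d^2 + 1 / (real n + 1)"]) (auto intro: less_imp_le)
    also have "d^2 \<le> (norm z)^2" using dle[OF that] d0 by (intro power_mono) auto
    finally show ?thesis by simp
  qed
  have orth: "cinner x0 m = 0" if "psi m = 0" for m
  proof (rule ccontr)
    assume c: "cinner x0 m \<noteq> 0"
    define c where "c = cinner x0 m"
    define r where "r = 1 / ((norm m)^2 + 1)"
    define t where "t = - (complex_of_real r * cnj c)"
    have r0: "0 < r" unfolding r_def by (simp add: add_nonneg_pos)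
    have rm: "r * (norm m)^2 < 1" unfolding r_def by (simp add: divide_less_eq add_nonneg_pos)
    have zA: "x0 + t *\<^sub>C m \<in> A" using \<open>psi x0 = 1\<close> that by (simp add: A_def add scal)
    have cc2: "cnj c * c = complex_of_real ((cmod c)^2)" by (metis complex_norm_square mult.commute)
    have tc: "t * c = - complex_of_real (r * (cmod c)^2)"
      unfolding t_def by (simp only: mult_minus_left mult.assoc cc2 of_real_mult)
    have nt: "cmod t = r * cmod c" unfolding t_def using r0 by (simp add: norm_mult)
    have "(norm (x0 + t *\<^sub>C m))^2 = (norm x0)^2 + (norm (t *\<^sub>C m))^2 + 2 * Re (t * c)"
      by (simp add: norm_sq_add cinner_scaleC_right c_def)
    also have "\<dots> = (norm x0)^2 + (r * cmod c)^2 * (norm m)^2 - 2 * r * (cmod c)^2"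
      by (simp add: tc norm_scaleC nt power_mult_distrib)
    also have "\<dots> < (norm x0)^2"
    proof -
      have cc: "0 < (cmod c)^2" using c c_def by simp
      have "(r * cmod c)^2 * (norm m)^2 = (r * (norm m)^2) * (r * (cmod c)^2)"
        by (simp add: power_mult_distrib power2_eq_square)
      also have "\<dots> < 1 * (r * (cmod c)^2)" using rm r0 cc by (intro mult_strict_right_mono) auto
      finally have X: "(r * cmod c)^2 * (norm m)^2 < r * (cmod c)^2" by simp
      have Y: "0 < r * (cmod c)^2" using r0 cc by simp
      show ?thesis using X Y by linarith
    qed
    finally show False using x0min[OF zA] by simp
  qed
  have x0ne: "x0 \<noteq> 0" using \<open>psi x0 = 1\<close> psi0 by auto
  define n2 where "n2 = (norm x0)^2"
  have n2: "n2 > 0" using x0ne by (simp add: n2_def)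
  show ?thesis
  proof (intro exI allI)
    fix x
    have "psi (x - psi x *\<^sub>C x0) = 0" using \<open>psi x0 = 1\<close> by (simp add: psim scal)
    hence "cinner x0 (x - psi x *\<^sub>C x0) = 0" by (rule orth)
    hence "cinner x0 x = psi x * complex_of_real n2"
      by (simp add: cinner_diff_right cinner_scaleC_right cinner_self n2_def)
    thus "psi x = cinner ((1 / n2) *\<^sub>R x0) x" using n2
      by (simp add: cinner_scaleR_left)
  qed
qed

lemma badj_prop:
  fixes f :: "'a::chilbert_space \<Rightarrow> 'a"
  assumes "bounded_clinear f"
  shows "cinner (f x) y = cinner x (badj f y)"
proof -
  obtain M where add: "\<And>x y. f (x + y) = f x + f y" and scal: "\<And>a x. f (a *\<^sub>C x) = a *\<^sub>C f x"
    and bnd: "\<And>x. norm (f x) \<le> norm x * M"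
    using assms unfolding bounded_clinear_def by blast
  have "\<exists>w. \<forall>x. cinner y (f x) = cinner w x"
  proof (rule riesz)
    show "cinner y (f (x1 + x2)) = cinner y (f x1) + cinner y (f x2)" for x1 x2
      by (simp add: add cinner_add_right)
    show "cinner y (f (a *\<^sub>C x1)) = a * cinner y (f x1)" for a x1
      by (simp add: scal cinner_scaleC_right)
    show "cmod (cinner y (f x1)) \<le> (norm y * M) * norm x1" for x1
      using cauchy_schwarz[of y "f x1"] bnd[of x1]
      by (smt (verit) mult.assoc mult.commute mult_left_mono norm_ge_zero)
  qed
  then obtain w where w: "\<And>x. cinner y (f x) = cinner w x" by blast
  have "\<forall>u\<in>dom (UNIV, f). cinner (app (UNIV, f) u) y = cinner u w"
    using w by (metis app_pair cinner_commute)
  hence "app (adjoint (UNIV, f)) y = w" by (intro adjoint_char(2)) simp_all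
  hence "badj f y = w" by (simp add: badj_def)
  thus ?thesis using w by (metis cinner_commute)
qed

lemma badj_prop2:
  assumes "bounded_clinear (f::'a::chilbert_space \<Rightarrow> 'a)"
  shows "cinner y (f x) = cinner (badj f y) x"
  using badj_prop[OF assms, of x y] by (metis cinner_commute)

lemma badj_unique:
  assumes "bounded_clinear (f::'a::chilbert_space \<Rightarrow> 'a)" "\<And>x. cinner (f x) y = cinner x w"
  shows "badj f y = w"
proof -
  have "badj f y - w = 0"
    by (rule dense_orth[of UNIV]) (simp_all add: cinner_diff_right assms(2) badj_prop[OF assms(1), symmetric])
  thus ?thesis by simp
qed

lemma badj_diff:
  assumes "bounded_clinear (f::'a::chilbert_space \<Rightarrow> 'a)"
  shows "badj f (x - y) = badj f x - badj f y"
  by (rule badj_unique[OF assms]) (simp add: cinner_diff_right badj_prop[OF assms])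

lemma badj_norm:
  assumes "bounded_clinear (f::'a::chilbert_space \<Rightarrow> 'a)"
  obtains M where "\<And>y. norm (badj f y) \<le> M * norm y"
proof -
  obtain M where bnd: "\<And>x. norm (f x) \<le> norm x * M" using assms unfolding bounded_clinear_def by blast
  have "norm (badj f y) \<le> M * norm y" for y
  proof (cases "badj f y = 0")
    case True
    have "0 \<le> norm y * M" using bnd[of y] norm_ge_zero order_trans by blast
    then show ?thesis using True by (simp add: mult.commute)
  next
    case False
    have "(norm (badj f y))^2 = Re (cinner (f (badj f y)) y)"
      by (simp add: norm_sq_Re badj_prop[OF assms])
    also have "\<dots> \<le> norm (f (badj f y)) * norm y" using cauchy_schwarz
      by (meson complex_Re_le_cmod order_trans)
    also have "\<dots> \<le> norm (badj f y) * M * norm y" using bnd by (simp add: mult_right_mono)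
    finally have "norm (badj f y) * norm (badj f y) \<le> norm (badj f y) * (M * norm y)"
      by (simp add: power2_eq_square mult.assoc)
    thus ?thesis using False by simp
  qed
  thus ?thesis using that by blast
qed

lemma badj_tendsto:
  assumes "bounded_clinear (f::'a::chilbert_space \<Rightarrow> 'a)" "X \<longlonglongrightarrow> a"
  shows "(\<lambda>n. badj f (X n)) \<longlonglongrightarrow> badj f a"
proof -
  obtain M where M: "\<And>y. norm (badj f y) \<le> M * norm y" using badj_norm[OF assms(1)] by blast
  show ?thesis
    by (rule lipschitz_tendsto[OF _ assms(2), of _ M]) (simp add: badj_diff[OF assms(1), symmetric] M)
qed

lemma bclin_diff:
  assumes "bounded_clinear (f::'a::complex_inner \<Rightarrow> 'a)"
  shows "f (x - y) = f x - f y"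
proof -
  have "f (x - y) + f y = f x" using assms unfolding bounded_clinear_def by (metis diff_add_cancel)
  thus ?thesis by (simp add: eq_diff_eq)
qed

lemma bclin_tendsto:
  assumes "bounded_clinear (f::'a::complex_inner \<Rightarrow> 'a)" "X \<longlonglongrightarrow> a"
  shows "(\<lambda>n. f (X n)) \<longlonglongrightarrow> f a"
proof -
  obtain M where bnd: "\<And>x. norm (f x) \<le> norm x * M" using assms unfolding bounded_clinear_def by blast
  show ?thesis
  proof (rule lipschitz_tendsto[OF _ assms(2), of _ M])
    fix x y show "norm (f x - f y) \<le> M * norm (x - y)"
      using bnd[of "x - y"] by (simp add: bclin_diff[OF assms(1)] mult.commute)
  qed
qed

lemma bclin_sum:
  assumes "bounded_clinear (f::'a::complex_inner \<Rightarrow> 'a)"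
  shows "f (\<Sum>i\<in>A. g i) = (\<Sum>i\<in>A. f (g i))"
proof (induction A rule: infinite_finite_induct)
  case (empty) show ?case using bclin_diff[OF assms, of 0 0] by simp
qed (use assms bclin_diff[OF assms, of 0 0] in \<open>auto simp: bounded_clinear_def\<close>)

lemma bclin_minus:
  assumes "bounded_clinear (f::'a::complex_inner \<Rightarrow> 'a)"
  shows "f (- x) = - f x"
  using bclin_diff[OF assms, of 0 x] bclin_diff[OF assms, of 0 0] by simp

lemma badj_bclin:
  assumes "bounded_clinear (f::'a::chilbert_space \<Rightarrow> 'a)"
  shows "bounded_clinear (badj f)"
proof -
  obtain M where M: "\<And>y. norm (badj f y) \<le> M * norm y" using badj_norm[OF assms(1)] by blast
  show ?thesis unfolding bounded_clinear_def
  proof (intro conjI allI exI)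
    fix x y show "badj f (x + y) = badj f x + badj f y"
      by (rule badj_unique[OF assms]) (simp add: cinner_add_right badj_prop[OF assms])
  next
    fix a x show "badj f (a *\<^sub>C x) = a *\<^sub>C badj f x"
      by (rule badj_unique[OF assms]) (simp add: cinner_scaleC_right badj_prop[OF assms])
  next
    fix x show "norm (badj f x) \<le> norm x * M" using M[of x] by (simp add: mult.commute)
  qed
qed

lemma extend:
  fixes A :: "'a::chilbert_space linop" and Rs :: "nat \<Rightarrow> 'a linop" and I :: "nat set"
  assumes fin: "finite I"
    and dA: "diffop D A" and dR: "\<forall>k\<in>I. diffop D (Rs k)"
    and cR: "\<forall>k\<in>I. seqclosed (Rs k)"
    and Dsub: "\<forall>x\<in>D. \<forall>y\<in>D. x - y \<in> D"
    and diss: "\<forall>w\<in>D. 2 * Re (cinner (app A w) w) = - (\<Sum>k\<in>I. (norm (app (Rs k) w))^2)"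
    and s: "\<forall>n. s n \<in> D" "s \<longlonglongrightarrow> u" "(\<lambda>n. app A (s n)) \<longlonglongrightarrow> a"
  shows "\<forall>k\<in>I. u \<in> dom (Rs k) \<and> (\<lambda>n. app (Rs k) (s n)) \<longlonglongrightarrow> app (Rs k) u"
    and "2 * Re (cinner a u) = - (\<Sum>k\<in>I. (norm (app (Rs k) u))^2)"
proof -
  have "Bseq (\<lambda>n. app A (s n))" using s(3) convergent_imp_Bseq convergent_def by blast
  then obtain B where B: "0 < B" "\<And>n. norm (app A (s n)) \<le> B" by (metis BseqE)
  have key: "(norm (app (Rs k) (s m) - app (Rs k) (s n)))^2 \<le> 4 * B * norm (s m - s n)"
    if k: "k \<in> I" for k m n
  proof -
    define w where "w = s m - s n"
    have wD: "w \<in> D" using Dsub s(1) w_def by blast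
    have Rw: "app (Rs k) w = app (Rs k) (s m) - app (Rs k) (s n)"
      using dR k s(1) unfolding diffop_def w_def by blast
    have Aw: "app A w = app A (s m) - app A (s n)"
      using dA s(1) unfolding diffop_def w_def by blast
    have nAw: "norm (app A w) \<le> 2 * B"
      unfolding Aw using norm_triangle_ineq4[of "app A (s m)" "app A (s n)"] B(2)[of m] B(2)[of n] by linarith
    have "(norm (app (Rs k) w))^2 \<le> (\<Sum>j\<in>I. (norm (app (Rs j) w))^2)"
      using fin k by (intro member_le_sum) auto
    also have "\<dots> = - 2 * Re (cinner (app A w) w)" using diss wD by simp
    also have "\<dots> \<le> 2 * (norm (app A w) * norm w)"
      using real_cs[of "app A w" w] by linarith
    also have "\<dots> \<le> 2 * (2 * B * norm w)" using mult_right_mono[OF nAw norm_ge_zero[of w]] by (simp add: algebra_simps)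
    finally have "(norm (app (Rs k) w))^2 \<le> 4 * B * norm w" by simp
    thus ?thesis by (metis Rw w_def)
  qed
  have sC: "Cauchy s" using s(2) LIMSEQ_imp_Cauchy by blast
  show conv: "\<forall>k\<in>I. u \<in> dom (Rs k) \<and> (\<lambda>n. app (Rs k) (s n)) \<longlonglongrightarrow> app (Rs k) u"
  proof
    fix k assume k: "k \<in> I"
    have "Cauchy (\<lambda>n. app (Rs k) (s n))"
    proof (rule CauchyI)
      fix e :: real assume e: "0 < e"
      have "0 < e^2 / (4 * B)" using e B by simp
      then obtain M where M: "\<forall>m\<ge>M. \<forall>n\<ge>M. norm (s m - s n) < e^2 / (4 * B)"
        using sC unfolding Cauchy_iff by blast
      show "\<exists>M. \<forall>m\<ge>M. \<forall>n\<ge>M. norm (app (Rs k) (s m) - app (Rs k) (s n)) < e"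
      proof (intro exI allI impI)
        fix m n assume mn: "M \<le> m" "M \<le> n"
        have "4 * B * norm (s m - s n) < 4 * B * (e^2 / (4 * B))"
          using M mn B by (intro mult_strict_left_mono) auto
        also have "\<dots> = e^2" using B by simp
        finally have "(norm (app (Rs k) (s m) - app (Rs k) (s n)))^2 < e^2"
          using key[OF k, of m n] by linarith
        thus "norm (app (Rs k) (s m) - app (Rs k) (s n)) < e"
          by (rule power_less_imp_less_base) (use e in auto)
      qed
    qed
    then obtain y where y: "(\<lambda>n. app (Rs k) (s n)) \<longlonglongrightarrow> y"
      using Cauchy_convergent_iff convergent_def by blast
    have "\<forall>n. s n \<in> dom (Rs k)" using dR k s(1) unfolding diffop_def by blast
    hence "u \<in> dom (Rs k) \<and> app (Rs k) u = y" using cR k s(2) y unfolding seqclosed_def by blast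
    thus "u \<in> dom (Rs k) \<and> (\<lambda>n. app (Rs k) (s n)) \<longlonglongrightarrow> app (Rs k) u" using y by simp
  qed
  have L1: "(\<lambda>n. 2 * Re (cinner (app A (s n)) (s n))) \<longlonglongrightarrow> 2 * Re (cinner a u)"
    using s by (intro tendsto_intros)
  have L2: "(\<lambda>n. - (\<Sum>k\<in>I. (norm (app (Rs k) (s n)))^2)) \<longlonglongrightarrow> - (\<Sum>k\<in>I. (norm (app (Rs k) u))^2)"
    using conv by (intro tendsto_intros) auto
  have E: "(\<lambda>n. 2 * Re (cinner (app A (s n)) (s n))) = (\<lambda>n. - (\<Sum>k\<in>I. (norm (app (Rs k) (s n)))^2))"
  proof
    fix n show "2 * Re (cinner (app A (s n)) (s n)) = - (\<Sum>k\<in>I. (norm (app (Rs k) (s n)))^2)"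
      using diss s(1) by blast
  qed
  show "2 * Re (cinner a u) = - (\<Sum>k\<in>I. (norm (app (Rs k) u))^2)"
    using L1 unfolding E by (rule LIMSEQ_unique[OF _ L2])
qed

lemma cinner_if_right: "cinner x (if P then y else 0) = (if P then cinner x y else 0)" by simp
lemma cinner_if_left: "cinner (if P then y else 0) x = (if P then cinner y x else 0)" by simp

lemma gen11:
  fixes T :: "nat \<Rightarrow> nat \<Rightarrow> 'a::complex_inner \<Rightarrow> 'a"
  assumes ij: "i \<in> {1..d}" "j \<in> {1..d}"
    and H: "(\<Sum>k=1..d. cinner (T k i a) (T k j b)) = (if i = j then cinner a b else 0)"
  shows "cinner a (T i j b - (if i = j then b else 0)) + cinner (T j i a - (if j = i then a else 0)) b
     + (\<Sum>k=1..d. cinner (T k i a - (if k = i then a else 0)) (T k j b - (if k = j then b else 0))) = 0"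
proof -
  have "(\<Sum>k=1..d. cinner (T k i a - (if k = i then a else 0)) (T k j b - (if k = j then b else 0)))
     = (\<Sum>k=1..d. cinner (T k i a) (T k j b)) - (\<Sum>k=1..d. if k = j then cinner (T k i a) b else 0)
       - (\<Sum>k=1..d. if k = i then cinner a (T k j b) else 0)
       + (\<Sum>k=1..d. if k = i then (if k = j then cinner a b else 0) else 0)"
    by (simp add: cinner_diff_left cinner_diff_right cinner_if_left cinner_if_right sum_subtractf sum.distrib
        algebra_simps) auto
  also have "\<dots> = (if i = j then cinner a b else 0) - cinner (T j i a) b - cinner a (T i j b)
       + (if i = j then cinner a b else 0)"
    using ij H by simp
  finally show ?thesis using ij by (simp add: cinner_diff_left cinner_diff_right)
qed


lemma gen11b:
  fixes T :: "nat \<Rightarrow> nat \<Rightarrow> 'a::complex_inner \<Rightarrow> 'a"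
  assumes ij: "i \<in> {1..d}" "j \<in> {1..d}"
    and H: "(\<Sum>k=1..d. cinner (T k i a) (T k j b)) = (if i = j then cinner a b else 0)"
  shows "cinner a (T i j b - (if j = i then b else 0)) + cinner (T j i a - (if i = j then a else 0)) b
     + (\<Sum>k=1..d. cinner (T k i a - (if i = k then a else 0)) (T k j b - (if j = k then b else 0))) = 0"
proof -
  have "(\<Sum>k=1..d. cinner (T k i a - (if i = k then a else 0)) (T k j b - (if j = k then b else 0)))
     = (\<Sum>k=1..d. cinner (T k i a) (T k j b)) - (\<Sum>k=1..d. if k = j then cinner (T k i a) b else 0)
       - (\<Sum>k=1..d. if k = i then cinner a (T k j b) else 0)
       + (\<Sum>k=1..d. if k = i then (if k = j then cinner a b else 0) else 0)"
    by (simp add: cinner_diff_left cinner_diff_right cinner_if_left cinner_if_right sum_subtractf sum.distrib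
        algebra_simps) auto
  also have "\<dots> = (if i = j then cinner a b else 0) - cinner (T j i a) b - cinner a (T i j b)
       + (if i = j then cinner a b else 0)"
    using ij H by simp
  finally show ?thesis using ij by (simp add: cinner_diff_left cinner_diff_right)
qed

lemma seqclosedD:
  assumes "seqclosed T" "\<forall>n. s n \<in> dom T" "s \<longlonglongrightarrow> u" "(\<lambda>n. app T (s n)) \<longlonglongrightarrow> w"
  shows "u \<in> dom T \<and> app T u = w"
  using assms unfolding seqclosed_def by blast

lemma alg:
  fixes S :: "nat \<Rightarrow> nat \<Rightarrow> 'a::chilbert_space \<Rightarrow> 'a"
  assumes bS: "\<forall>i\<in>{1..d}. \<forall>k\<in>{1..d}. bounded_clinear (S i k)"
    and coiso: "\<forall>i\<in>{1..d}. \<forall>j\<in>{1..d}. \<forall>u. (\<Sum>k=1..d. S i k (badj (S j k) u)) = (if i = j then u else 0)"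
    and N: "\<forall>k\<in>{1..d}. Nv k = - (\<Sum>l=1..d. badj (S l k) (Rv l))"
    and i: "i \<in> {1..d}"
  shows "Rv i = - (\<Sum>k=1..d. S i k (Nv k))"
proof -
  have "(\<Sum>k=1..d. S i k (Nv k)) = (\<Sum>k=1..d. - (\<Sum>l=1..d. S i k (badj (S l k) (Rv l))))"
  proof (rule sum.cong[OF refl])
    fix k assume k: "k \<in> {1..d}"
    have b: "bounded_clinear (S i k)" using bS i k by blast
    show "S i k (Nv k) = - (\<Sum>l=1..d. S i k (badj (S l k) (Rv l)))"
      using N k by (simp add: bclin_minus[OF b] bclin_sum[OF b])
  qed
  also have "\<dots> = - (\<Sum>l=1..d. \<Sum>k=1..d. S i k (badj (S l k) (Rv l)))"
    by (simp add: sum_negf sum.swap[of "\<lambda>k l. S i k (badj (S l k) (Rv l))"])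
  also have "\<dots> = - (\<Sum>l=1..d. if i = l then Rv l else 0)"
  proof -
    have "(\<Sum>l=1..d. \<Sum>k=1..d. S i k (badj (S l k) (Rv l))) = (\<Sum>l=1..d. if i = l then Rv l else 0)"
      by (rule sum.cong[OF refl]) (use coiso i in blast)
    thus ?thesis by simp
  qed
  also have "\<dots> = - Rv i" using i by simp
  finally show ?thesis by simp
qed

theorem mainTheorem1:
  fixes F :: "nat \<Rightarrow> nat \<Rightarrow> 'a::chilbert_space linop"
    and S :: "nat \<Rightarrow> nat \<Rightarrow> 'a \<Rightarrow> 'a"
    and d :: nat
    and D Dt :: "'a set"
    and C :: "'a linop"
    and \<delta> b1 b2 :: real
  assumes separable: "\<exists>A::'a set. countable A \<and> closure A = UNIV"
    and d_pos: "d \<ge> 1"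
    \<comment> \<open>(i)\<close>
    and C_i: "\<forall>i\<le>d. \<forall>j\<le>d. closed_op (F i j)"
    \<comment> \<open>(ii)\<close>
    and C_ii_F: "\<forall>i\<in>{1..d}. \<forall>j\<in>{1..d}.
                   op_eq (F i j) (UNIV, \<lambda>u. S i j u - (if i = j then u else 0))"
    and C_ii_bdd: "\<forall>i\<in>{1..d}. \<forall>j\<in>{1..d}. bounded_clinear (S i j)"
    and C_ii_iso: "\<forall>i\<in>{1..d}. \<forall>j\<in>{1..d}. \<forall>u.
                   (\<Sum>k=1..d. badj (S k i) (S k j u)) = (if i = j then u else 0)"
    and C_ii_coiso: "\<forall>i\<in>{1..d}. \<forall>j\<in>{1..d}. \<forall>u.
                   (\<Sum>k=1..d. S i k (badj (S j k) u)) = (if i = j then u else 0)"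
    \<comment> \<open>(iii)\<close>
    and C_iii_D: "dense_subspace D \<and> is_core D (F 0 0) \<and>
                  (\<forall>i\<in>{1..d}. is_core D (F i 0) \<and> is_core D (F 0 i))"
    and C_iii_Dt: "dense_subspace Dt \<and> is_core Dt (adjoint (F 0 0)) \<and>
                  (\<forall>i\<in>{1..d}. is_core Dt (adjoint (F i 0)) \<and> is_core Dt (adjoint (F 0 i)))"
    \<comment> \<open>(iv)\<close>
    and C_iv: "\<forall>i\<in>{1..d}. D \<union> Dt \<subseteq> dom (adjoint (F 0 i)) \<and> D \<union> Dt \<subseteq> dom (F i 0) \<and>
                  dom (F 0 0) \<subseteq> dom (F 0 i)"
    \<comment> \<open>(v)\<close>
    and C_v: "\<forall>k\<in>{1..d}. \<forall>i\<in>{1..d}. \<forall>u\<in>dom (F 0 0). S k i u \<in> dom (adjoint (F k 0))"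
    \<comment> \<open>(vi)\<close>
    and C_vi_gen: "generates_contraction_sg (F 0 0) \<and> generates_contraction_sg (adjoint (F 0 0))"
    and C_vi_D: "\<forall>u\<in>D. 2 * Re (cinner (app (F 0 0) u) u) = - (\<Sum>k=1..d. (norm (app (F k 0) u))\<^sup>2)"
    and C_vi_Dt: "\<forall>v\<in>Dt. 2 * Re (cinner (app (adjoint (F 0 0)) v) v)
                     = - (\<Sum>k=1..d. (norm (app (adjoint (F 0 k)) v))\<^sup>2)"
    \<comment> \<open>(vii)\<close>
    and C_vii: "\<forall>i\<in>{1..d}. \<forall>u\<in>D \<union> Dt.
                  app (adjoint (F 0 i)) u = - (\<Sum>k=1..d. badj (S k i) (app (F k 0) u))"
    \<comment> \<open>(viii)\<close>
    and C_viii_C: "pos_selfadjoint C"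
    and C_viii_const: "\<delta> > 0 \<and> b1 \<ge> 0 \<and> b2 \<ge> 0"
    and C_viii_dom: "dom (op_sqrt C) \<subseteq> (\<Inter>i\<in>{0..d}. \<Inter>j\<in>{0..d}. dom (F i j))"
    and C_viii_a: "\<forall>\<epsilon>\<in>{0<..<\<delta>}. \<exists>De. dense_subspace De \<and> De \<subseteq> Dt \<and>
                     app (op_sqrt (C_eps \<epsilon> C)) ` De \<subseteq> Dt \<and>
                     (\<forall>i\<le>d. \<forall>j\<le>d. \<exists>M. \<forall>u\<in>De.
                        app (op_sqrt (C_eps \<epsilon> C)) u \<in> dom (adjoint (F i j)) \<and>
                        norm (app (adjoint (F i j)) (app (op_sqrt (C_eps \<epsilon> C)) u)) \<le> M * norm u)"
    and C_viii_b: "\<forall>\<epsilon>\<in>{0<..<\<delta>}. \<forall>u::nat \<Rightarrow> 'a.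
                     (\<forall>i\<le>d. u i \<in> (\<Inter>i\<in>{0..d}. \<Inter>j\<in>{0..d}. dom (F i j))) \<longrightarrow>
                     Re (\<Sum>i=0..d. \<Sum>j=0..d.
                          cinner (u i) (app (C_eps \<epsilon> C) (app (F i j) (u j)))
                        + cinner (app (F j i) (u i)) (app (C_eps \<epsilon> C) (u j))
                        + (\<Sum>k=1..d. cinner (app (F k i) (u i)) (app (C_eps \<epsilon> C) (app (F k j) (u j)))))
                     \<le> (\<Sum>i=0..d. b1 * Re (cinner (u i) (app (C_eps \<epsilon> C) (u i))) + b2 * (norm (u i))\<^sup>2)"
  shows
    \<comment> \<open>(1)\<close>
    "(\<forall>k\<in>{1..d}. dom (F 0 0) \<union> dom (adjoint (F 0 0)) \<subseteq> dom (F k 0) \<and>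
                  dom (F 0 0) \<union> dom (adjoint (F 0 0)) \<subseteq> dom (adjoint (F 0 k)))
     \<comment> \<open>(2)\<close>
     \<and> (\<Inter>i\<in>{0..d}. \<Inter>j\<in>{0..d}. dom (F i j)) = dom (F 0 0)
     \<and> (\<forall>u\<in>dom (F 0 0). 2 * Re (cinner (app (F 0 0) u) u) = - (\<Sum>k=1..d. (norm (app (F k 0) u))\<^sup>2))
     \<and> (\<forall>v\<in>dom (adjoint (F 0 0)). 2 * Re (cinner (app (adjoint (F 0 0)) v) v)
                     = - (\<Sum>k=1..d. (norm (app (adjoint (F 0 k)) v))\<^sup>2))
     \<comment> \<open>(3)\<close>
     \<and> (\<forall>i\<in>{1..d}. \<forall>u\<in>dom (F 0 0) \<union> dom (adjoint (F 0 0)).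
          app (adjoint (F 0 i)) u = - (\<Sum>k=1..d. badj (S k i) (app (F k 0) u)) \<and>
          app (F i 0) u = - (\<Sum>k=1..d. S i k (app (adjoint (F 0 k)) u)))
     \<comment> \<open>(4)\<close>
     \<and> (\<forall>i\<in>{1..d}. \<forall>u\<in>dom (F 0 0).
          app (F 0 i) u = - (\<Sum>k=1..d. app (adjoint (F k 0)) (S k i u)))
     \<comment> \<open>(5)\<close>
     \<and> (\<forall>u::nat \<Rightarrow> 'a. (\<forall>i\<le>d. u i \<in> (\<Inter>i\<in>{0..d}. \<Inter>j\<in>{0..d}. dom (F i j))) \<longrightarrow>
          (\<Sum>i=0..d. \<Sum>j=0..d.
              cinner (u i) (app (F i j) (u j)) + cinner (app (F j i) (u i)) (u j)
            + (\<Sum>k=1..d. cinner (app (F k i) (u i)) (app (F k j) (u j)))) = 0)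
     \<and> (\<forall>v::nat \<Rightarrow> 'a. (\<forall>i\<le>d. v i \<in> Dt) \<longrightarrow>
          (\<Sum>i=0..d. \<Sum>j=0..d.
              cinner (v i) (app (adjoint (F j i)) (v j)) + cinner (app (adjoint (F i j)) (v i)) (v j)
            + (\<Sum>k=1..d. cinner (app (adjoint (F i k)) (v i)) (app (adjoint (F j k)) (v j)))) = 0)"
proof -
  have Dsp: "csubspace D" and Dd: "closure D = UNIV" using C_iii_D dense_subspace_def by auto
  have Dtsp: "csubspace Dt" and Dtd: "closure Dt = UNIV" using C_iii_Dt dense_subspace_def by auto
  have coreK: "is_core D (F 0 0)" using C_iii_D by blast
  have coreKs: "is_core Dt (adjoint (F 0 0))" using C_iii_Dt by blast
  have DK: "D \<subseteq> dom (F 0 0)" using coreK is_core_def by blast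
  have DtK: "Dt \<subseteq> dom (adjoint (F 0 0))" using coreKs is_core_def by blast
  have DtR: "Dt \<subseteq> dom (adjoint (F i 0))" if "i \<in> {1..d}" for i
    using C_iii_Dt that is_core_def by blast
  have DR: "D \<union> Dt \<subseteq> dom (F i 0)" if "i \<in> {1..d}" for i using C_iv that by blast
  have DNs: "D \<union> Dt \<subseteq> dom (adjoint (F 0 i))" if "i \<in> {1..d}" for i using C_iv that by blast
  have KN: "dom (F 0 0) \<subseteq> dom (F 0 i)" if "i \<in> {1..d}" for i using C_iv that by blast
  have lin: "linear_op (F i j)" if "i \<le> d" "j \<le> d" for i j using C_i that closed_op_def by blast
  have sc: "seqclosed (F i j)" if "i \<le> d" "j \<le> d" for i j using C_i that closed_seqclosed by blast
  have dense_sup: "closure X = UNIV" if "Y \<subseteq> X" "closure Y = UNIV" for X Y :: "'a set"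
    using closure_mono[OF that(1)] that(2) by blast
  have dK: "closure (dom (F 0 0)) = UNIV" using dense_sup[OF DK Dd] .
  have dR: "closure (dom (F i 0)) = UNIV" if "i \<in> {1..d}" for i
    using dense_sup[of D "dom (F i 0)"] DR[OF that] Dd by blast
  have dN: "closure (dom (F 0 i)) = UNIV" if "i \<in> {1..d}" for i
    using dense_sup[of "dom (F 0 0)" "dom (F 0 i)"] KN[OF that] dK by blast
  have bS: "bounded_clinear (S i j)" if "i \<in> {1..d}" "j \<in> {1..d}" for i j
    using C_ii_bdd that by blast
  have Fij_dom: "dom (F i j) = UNIV" if "i \<in> {1..d}" "j \<in> {1..d}" for i j
    using C_ii_F that unfolding op_eq_def by simp
  have Fij_app: "app (F i j) u = S i j u - (if i = j then u else 0)" if "i \<in> {1..d}" "j \<in> {1..d}" for i j u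
    using C_ii_F that unfolding op_eq_def by simp
  have Fij_adj: "v \<in> dom (adjoint (F i j)) \<and> app (adjoint (F i j)) v = badj (S i j) v - (if i = j then v else 0)"
    if ij: "i \<in> {1..d}" "j \<in> {1..d}" for i j v
  proof -
    have dd: "closure (dom (F i j)) = UNIV" using Fij_dom[OF ij] by simp
    have "\<forall>u\<in>dom (F i j). cinner (app (F i j) u) v = cinner u (badj (S i j) v - (if i = j then v else 0))"
      by (simp add: Fij_app[OF ij] cinner_diff_left cinner_diff_right badj_prop[OF bS[OF ij]]
          cinner_if_left cinner_if_right)
    thus ?thesis using adjoint_char[OF dd] by blast
  qed
  have stepA: "(\<forall>k\<in>{1..d}. u \<in> dom (F k 0))
      \<and> 2 * Re (cinner (app (F 0 0) u) u) = - (\<Sum>k=1..d. (norm (app (F k 0) u))\<^sup>2)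
      \<and> (\<forall>i\<in>{1..d}. u \<in> dom (adjoint (F 0 i)) \<and>
            app (adjoint (F 0 i)) u = - (\<Sum>k=1..d. badj (S k i) (app (F k 0) u)))"
    if u: "u \<in> dom (F 0 0)" for u
  proof -
    obtain s where s: "\<forall>n. s n \<in> D" "s \<longlonglongrightarrow> u" "(\<lambda>n. app (F 0 0) (s n)) \<longlonglongrightarrow> app (F 0 0) u"
      using core_seq[OF coreK u] by blast
    have h1: "diffop D (F 0 0)" using linear_diffop[OF lin DK] d_pos by simp
    have h2: "\<forall>k\<in>{1..d}. diffop D (F k 0)" using linear_diffop[OF lin] DR by auto
    have h3: "\<forall>k\<in>{1..d}. seqclosed (F k 0)" using sc by auto
    have h4: "\<forall>x\<in>D. \<forall>y\<in>D. x - y \<in> D" using csubspace_diff[OF Dsp] by blast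
    note extA = extend[of "{1..d}" D "F 0 0" "\<lambda>k. F k 0", OF _ h1 _ _ h4 _ s, simplified]
    have conv: "\<forall>k\<in>{1..d}. u \<in> dom (F k 0) \<and> (\<lambda>n. app (F k 0) (s n)) \<longlonglongrightarrow> app (F k 0) u"
      using extA(1) h2 h3 C_vi_D by simp
    have id: "2 * Re (cinner (app (F 0 0) u) u) = - (\<Sum>k=1..d. (norm (app (F k 0) u))\<^sup>2)"
      using extA(2) h2 h3 C_vi_D by simp
    have Ns: "u \<in> dom (adjoint (F 0 i)) \<and>
            app (adjoint (F 0 i)) u = - (\<Sum>k=1..d. badj (S k i) (app (F k 0) u))" if i: "i \<in> {1..d}" for i
    proof -
      have eq: "(\<lambda>n. app (adjoint (F 0 i)) (s n)) = (\<lambda>n. - (\<Sum>k=1..d. badj (S k i) (app (F k 0) (s n))))"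
        using C_vii s(1) i by auto
      have "(\<lambda>n. - (\<Sum>k=1..d. badj (S k i) (app (F k 0) (s n)))) \<longlonglongrightarrow> - (\<Sum>k=1..d. badj (S k i) (app (F k 0) u))"
        by (intro tendsto_minus tendsto_sum badj_tendsto bS) (use conv i in auto)
      hence lim: "(\<lambda>n. app (adjoint (F 0 i)) (s n)) \<longlonglongrightarrow> - (\<Sum>k=1..d. badj (S k i) (app (F k 0) u))"
        unfolding eq .
      have "\<forall>n. s n \<in> dom (adjoint (F 0 i))" using DNs[OF i] s(1) by blast
      thus ?thesis using seqclosedD[OF adjoint_seqclosed[OF dN[OF i]] _ s(2) lim] by blast
    qed
    show ?thesis using conv id Ns by blast
  qed
  have stepB: "(\<forall>k\<in>{1..d}. v \<in> dom (adjoint (F 0 k)))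
      \<and> 2 * Re (cinner (app (adjoint (F 0 0)) v) v) = - (\<Sum>k=1..d. (norm (app (adjoint (F 0 k)) v))\<^sup>2)
      \<and> (\<forall>i\<in>{1..d}. v \<in> dom (F i 0) \<and> app (F i 0) v = - (\<Sum>k=1..d. S i k (app (adjoint (F 0 k)) v)))
      \<and> (\<forall>i\<in>{1..d}. app (adjoint (F 0 i)) v = - (\<Sum>k=1..d. badj (S k i) (app (F k 0) v)))"
    if v: "v \<in> dom (adjoint (F 0 0))" for v
  proof -
    obtain s where s: "\<forall>n. s n \<in> Dt" "s \<longlonglongrightarrow> v" "(\<lambda>n. app (adjoint (F 0 0)) (s n)) \<longlonglongrightarrow> app (adjoint (F 0 0)) v"
      using core_seq[OF coreKs v] by blast
    have h1: "diffop Dt (adjoint (F 0 0))" using adjoint_diffop[OF dK DtK] .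
    have h2: "\<forall>k\<in>{1..d}. diffop Dt (adjoint (F 0 k))" using adjoint_diffop[OF dN] DNs by auto
    have h3: "\<forall>k\<in>{1..d}. seqclosed (adjoint (F 0 k))" using adjoint_seqclosed[OF dN] by auto
    have h4: "\<forall>x\<in>Dt. \<forall>y\<in>Dt. x - y \<in> Dt" using csubspace_diff[OF Dtsp] by blast
    note extA = extend[of "{1..d}" Dt "adjoint (F 0 0)" "\<lambda>k. adjoint (F 0 k)", OF _ h1 _ _ h4 _ s, simplified]
    have conv: "\<forall>k\<in>{1..d}. v \<in> dom (adjoint (F 0 k)) \<and> (\<lambda>n. app (adjoint (F 0 k)) (s n)) \<longlonglongrightarrow> app (adjoint (F 0 k)) v"
      using extA(1) h2 h3 C_vi_Dt by simp
    have id: "2 * Re (cinner (app (adjoint (F 0 0)) v) v) = - (\<Sum>k=1..d. (norm (app (adjoint (F 0 k)) v))\<^sup>2)"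
      using extA(2) h2 h3 C_vi_Dt by simp
    have Rn: "app (F i 0) (s n) = - (\<Sum>k=1..d. S i k (app (adjoint (F 0 k)) (s n)))" if i: "i \<in> {1..d}" for i n
    proof (rule alg[where Rv = "\<lambda>l. app (F l 0) (s n)", OF _ C_ii_coiso _ i])
      show "\<forall>i\<in>{1..d}. \<forall>k\<in>{1..d}. bounded_clinear (S i k)" using bS by blast
      show "\<forall>k\<in>{1..d}. app (adjoint (F 0 k)) (s n) = - (\<Sum>l = 1..d. badj (S l k) (app (F l 0) (s n)))"
        using C_vii s(1) by blast
    qed
    have R: "v \<in> dom (F i 0) \<and> app (F i 0) v = - (\<Sum>k=1..d. S i k (app (adjoint (F 0 k)) v))
         \<and> (\<lambda>n. app (F i 0) (s n)) \<longlonglongrightarrow> app (F i 0) v"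
      if i: "i \<in> {1..d}" for i
    proof -
      have l0: "(\<lambda>n. - (\<Sum>k=1..d. S i k (app (adjoint (F 0 k)) (s n)))) \<longlonglongrightarrow> - (\<Sum>k=1..d. S i k (app (adjoint (F 0 k)) v))"
      proof (intro tendsto_minus tendsto_sum)
        fix k assume k: "k \<in> {1..d}"
        show "(\<lambda>n. S i k (app (adjoint (F 0 k)) (s n))) \<longlonglongrightarrow> S i k (app (adjoint (F 0 k)) v)"
          by (rule bclin_tendsto[OF bS[OF i k]]) (use conv k in blast)
      qed
      have eqR: "(\<lambda>n. app (F i 0) (s n)) = (\<lambda>n. - (\<Sum>k=1..d. S i k (app (adjoint (F 0 k)) (s n))))"
        by (rule ext) (rule Rn[OF i])
      have lim: "(\<lambda>n. app (F i 0) (s n)) \<longlonglongrightarrow> - (\<Sum>k=1..d. S i k (app (adjoint (F 0 k)) v))"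
        unfolding eqR by (rule l0)
      have "\<forall>n. s n \<in> dom (F i 0)" using DR[OF i] s(1) by blast
      hence "v \<in> dom (F i 0) \<and> app (F i 0) v = - (\<Sum>k=1..d. S i k (app (adjoint (F 0 k)) v))"
        using seqclosedD[OF sc[of i 0] _ s(2) lim] i by auto
      thus ?thesis using lim by simp
    qed
    have Ns: "app (adjoint (F 0 i)) v = - (\<Sum>k=1..d. badj (S k i) (app (F k 0) v))" if i: "i \<in> {1..d}" for i
    proof -
      have eq: "(\<lambda>n. app (adjoint (F 0 i)) (s n)) = (\<lambda>n. - (\<Sum>k=1..d. badj (S k i) (app (F k 0) (s n))))"
        using C_vii s(1) i by auto
      have "(\<lambda>n. - (\<Sum>k=1..d. badj (S k i) (app (F k 0) (s n)))) \<longlonglongrightarrow> - (\<Sum>k=1..d. badj (S k i) (app (F k 0) v))"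
      proof (intro tendsto_minus tendsto_sum)
        fix k assume k: "k \<in> {1..d}"
        show "(\<lambda>n. badj (S k i) (app (F k 0) (s n))) \<longlonglongrightarrow> badj (S k i) (app (F k 0) v)"
          by (rule badj_tendsto[OF bS[OF k i]]) (use R[OF k] in blast)
      qed
      hence lim: "(\<lambda>n. app (adjoint (F 0 i)) (s n)) \<longlonglongrightarrow> - (\<Sum>k=1..d. badj (S k i) (app (F k 0) v))"
        unfolding eq .
      have "(\<lambda>n. app (adjoint (F 0 i)) (s n)) \<longlonglongrightarrow> app (adjoint (F 0 i)) v" using conv i by blast
      thus ?thesis using LIMSEQ_unique[OF _ lim] by blast
    qed
    show ?thesis using conv id R Ns by blast
  qed
  have C1: "\<forall>k\<in>{1..d}. dom (F 0 0) \<union> dom (adjoint (F 0 0)) \<subseteq> dom (F k 0) \<and>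
                  dom (F 0 0) \<union> dom (adjoint (F 0 0)) \<subseteq> dom (adjoint (F 0 k))"
  proof (intro ballI conjI subsetI)
    fix k x assume k: "k \<in> {1..d}" and x: "x \<in> dom (F 0 0) \<union> dom (adjoint (F 0 0))"
    show "x \<in> dom (F k 0)"
    proof (cases "x \<in> dom (F 0 0)")
      case True then show ?thesis using stepA[OF True] k by blast
    next
      case False then have "x \<in> dom (adjoint (F 0 0))" using x by blast
      then show ?thesis using stepB k by blast
    qed
    show "x \<in> dom (adjoint (F 0 k))"
    proof (cases "x \<in> dom (F 0 0)")
      case True then show ?thesis using stepA[OF True] k by blast
    next
      case False then have "x \<in> dom (adjoint (F 0 0))" using x by blast
      then show ?thesis using stepB k by blast
    qed
  qed
  have domF: "(\<Inter>i\<in>{0..d}. \<Inter>j\<in>{0..d}. dom (F i j)) = dom (F 0 0)"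
  proof
    show "(\<Inter>i\<in>{0..d}. \<Inter>j\<in>{0..d}. dom (F i j)) \<subseteq> dom (F 0 0)" by auto
    show "dom (F 0 0) \<subseteq> (\<Inter>i\<in>{0..d}. \<Inter>j\<in>{0..d}. dom (F i j))"
    proof (intro subsetI INT_I)
      fix u i j assume u: "u \<in> dom (F 0 0)" and i: "i \<in> {0..d}" and j: "j \<in> {0..d}"
      show "u \<in> dom (F i j)"
      proof (cases "i = 0")
        case True
        show ?thesis
        proof (cases "j = 0")
          case True then show ?thesis using u \<open>i = 0\<close> by simp
        next
          case False then have "j \<in> {1..d}" using j by auto
          then show ?thesis using KN u \<open>i = 0\<close> by blast
        qed
      next
        case False then have i1: "i \<in> {1..d}" using i by auto
        show ?thesis
        proof (cases "j = 0")
          case True then show ?thesis using stepA[OF u] i1 by blast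
        next
          case False then have "j \<in> {1..d}" using j by auto
          then show ?thesis using Fij_dom i1 by blast
        qed
      qed
    qed
  qed
  have C2a: "\<forall>u\<in>dom (F 0 0). 2 * Re (cinner (app (F 0 0) u) u) = - (\<Sum>k=1..d. (norm (app (F k 0) u))\<^sup>2)"
    using stepA by blast
  have C2b: "\<forall>v\<in>dom (adjoint (F 0 0)). 2 * Re (cinner (app (adjoint (F 0 0)) v) v)
                     = - (\<Sum>k=1..d. (norm (app (adjoint (F 0 k)) v))\<^sup>2)"
    using stepB by blast
  have C3: "\<forall>i\<in>{1..d}. \<forall>u\<in>dom (F 0 0) \<union> dom (adjoint (F 0 0)).
          app (adjoint (F 0 i)) u = - (\<Sum>k=1..d. badj (S k i) (app (F k 0) u)) \<and>
          app (F i 0) u = - (\<Sum>k=1..d. S i k (app (adjoint (F 0 k)) u))"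
  proof (intro ballI)
    fix i u assume i: "i \<in> {1..d}" and u: "u \<in> dom (F 0 0) \<union> dom (adjoint (F 0 0))"
    show "app (adjoint (F 0 i)) u = - (\<Sum>k=1..d. badj (S k i) (app (F k 0) u)) \<and>
          app (F i 0) u = - (\<Sum>k=1..d. S i k (app (adjoint (F 0 k)) u))"
    proof (cases "u \<in> dom (F 0 0)")
      case True
      have N: "\<forall>k\<in>{1..d}. app (adjoint (F 0 k)) u = - (\<Sum>l=1..d. badj (S l k) (app (F l 0) u))"
        using stepA[OF True] by blast
      have "app (F i 0) u = - (\<Sum>k=1..d. S i k (app (adjoint (F 0 k)) u))"
        by (rule alg[where Rv = "\<lambda>l. app (F l 0) u", OF _ C_ii_coiso N i]) (use bS in blast)
      then show ?thesis using N i by blast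
    next
      case False then have "u \<in> dom (adjoint (F 0 0))" using u by blast
      then show ?thesis using stepB i by blast
    qed
  qed
  have C4: "\<forall>i\<in>{1..d}. \<forall>u\<in>dom (F 0 0).
          app (F 0 i) u = - (\<Sum>k=1..d. app (adjoint (F k 0)) (S k i u))"
  proof (intro ballI)
    fix i u assume i: "i \<in> {1..d}" and u: "u \<in> dom (F 0 0)"
    define x where "x = app (F 0 i) u"
    define y where "y = - (\<Sum>k=1..d. app (adjoint (F k 0)) (S k i u))"
    have "x - y = 0"
    proof (rule dense_orth[OF Dtd], intro ballI)
      fix v assume v: "v \<in> Dt"
      have uN: "u \<in> dom (F 0 i)" using KN[OF i] u by blast
      have vN: "v \<in> dom (adjoint (F 0 i))" using DNs[OF i] v by blast
      have "cinner x v = cinner u (app (adjoint (F 0 i)) v)"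
        unfolding x_def by (rule adjoint_prop[OF vN uN])
      also have "\<dots> = cinner u (- (\<Sum>k=1..d. badj (S k i) (app (F k 0) v)))"
        using C_vii i v by simp
      also have "\<dots> = - (\<Sum>k=1..d. cinner (S k i u) (app (F k 0) v))"
      proof -
        have "\<And>k. k \<in> {1..d} \<Longrightarrow> cinner u (badj (S k i) (app (F k 0) v)) = cinner (S k i u) (app (F k 0) v)"
          using badj_prop[OF bS[OF _ i]] by simp
        thus ?thesis by (simp add: cinner_minus_right cinner_sum_right)
      qed
      also have "\<dots> = - (\<Sum>k=1..d. cinner (app (adjoint (F k 0)) (S k i u)) v)"
      proof -
        have "cinner (S k i u) (app (F k 0) v) = cinner (app (adjoint (F k 0)) (S k i u)) v"
          if k: "k \<in> {1..d}" for k
        proof -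
          have a1: "S k i u \<in> dom (adjoint (F k 0))" using C_v k i u by blast
          have a2: "v \<in> dom (F k 0)" using DR[OF k] v by blast
          have "cinner (S k i u) (app (F k 0) v) = cnj (cinner (app (F k 0) v) (S k i u))"
            by (rule cinner_commute)
          also have "\<dots> = cnj (cinner v (app (adjoint (F k 0)) (S k i u)))"
            by (simp only: adjoint_prop[OF a1 a2])
          also have "\<dots> = cinner (app (adjoint (F k 0)) (S k i u)) v"
            by (rule cinner_commute[symmetric])
          finally show ?thesis .
        qed
        thus ?thesis by simp
      qed
      also have "\<dots> = cinner y v" unfolding y_def by (simp add: cinner_minus_left cinner_sum_left)
      finally have "cinner x v = cinner y v" .
      thus "cinner v (x - y) = 0" by (metis cinner_commute cinner_diff_left complex_cnj_zero diff_self)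
    qed
    hence "x = y" by simp
    thus "app (F 0 i) u = - (\<Sum>k=1..d. app (adjoint (F k 0)) (S k i u))"
      unfolding x_def y_def .
  qed
  have C5a: "\<forall>u::nat \<Rightarrow> 'a. (\<forall>i\<le>d. u i \<in> (\<Inter>i\<in>{0..d}. \<Inter>j\<in>{0..d}. dom (F i j))) \<longrightarrow>
          (\<Sum>i=0..d. \<Sum>j=0..d.
              cinner (u i) (app (F i j) (u j)) + cinner (app (F j i) (u i)) (u j)
            + (\<Sum>k=1..d. cinner (app (F k i) (u i)) (app (F k j) (u j)))) = 0"
  proof (intro allI impI)
    fix u :: "nat \<Rightarrow> 'a" assume uF: "\<forall>i\<le>d. u i \<in> (\<Inter>i\<in>{0..d}. \<Inter>j\<in>{0..d}. dom (F i j))"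
    have uK: "u i \<in> dom (F 0 0)" if "i \<le> d" for i using uF that domF by blast
    have trm: "cinner (u i) (app (F i j) (u j)) + cinner (app (F j i) (u i)) (u j)
            + (\<Sum>k=1..d. cinner (app (F k i) (u i)) (app (F k j) (u j))) = 0"
      if i: "i \<in> {0..d}" and j: "j \<in> {0..d}" for i j
    proof -
      consider "i = 0 \<and> j = 0" | "i = 0 \<and> j \<in> {1..d}" | "i \<in> {1..d} \<and> j = 0" | "i \<in> {1..d} \<and> j \<in> {1..d}"
        using i j by fastforce
      then show ?thesis
      proof cases
        case 1
        define a where "a = u 0"
        have a: "a \<in> dom (F 0 0)" using uK[of 0] a_def by simp
        have s1: "cinner a (app (F 0 0) a) + cinner (app (F 0 0) a) a = complex_of_real (2 * Re (cinner (app (F 0 0) a) a))"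
          using complex_add_cnj[of "cinner (app (F 0 0) a) a"] cinner_commute[of a "app (F 0 0) a"]
          by (simp add: add.commute)
        have s2: "(\<Sum>k=1..d. cinner (app (F k 0) a) (app (F k 0) a)) = complex_of_real (\<Sum>k=1..d. (norm (app (F k 0) a))\<^sup>2)"
          by (simp only: cinner_self of_real_sum)
        show ?thesis using 1 s1 s2 C2a a unfolding a_def by simp
      next
        case 2
        then have j1: "j \<in> {1..d}" and i0: "i = 0" by auto
        define a where "a = u 0"
        define b where "b = u j"
        have a: "a \<in> dom (F 0 0)" using uK[of 0] a_def by simp
        have b: "b \<in> dom (F 0 j)" using uK[of j] j KN[OF j1] b_def by auto
        have aN: "a \<in> dom (adjoint (F 0 j))" using stepA[OF a] j1 by blast
        have Na: "app (adjoint (F 0 j)) a = - (\<Sum>k=1..d. badj (S k j) (app (F k 0) a))"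
          using stepA[OF a] j1 by blast
        have e1: "(\<Sum>k=1..d. cinner (app (F k 0) a) (app (F k j) b))
            = (\<Sum>k=1..d. cinner (badj (S k j) (app (F k 0) a)) b) - cinner (app (F j 0) a) b"
        proof -
          have "(\<Sum>k=1..d. cinner (app (F k 0) a) (app (F k j) b))
              = (\<Sum>k=1..d. cinner (badj (S k j) (app (F k 0) a)) b - (if k = j then cinner (app (F k 0) a) b else 0))"
          proof (rule sum.cong[OF refl])
            fix k assume k: "k \<in> {1..d}"
            show "cinner (app (F k 0) a) (app (F k j) b) = cinner (badj (S k j) (app (F k 0) a)) b - (if k = j then cinner (app (F k 0) a) b else 0)"
              by (simp add: Fij_app[OF k j1] cinner_diff_right badj_prop2[OF bS[OF k j1]])
          qed
          also have "\<dots> = (\<Sum>k=1..d. cinner (badj (S k j) (app (F k 0) a)) b) - cinner (app (F j 0) a) b"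
            using j1 by (simp add: sum_subtractf)
          finally show ?thesis .
        qed
        have e2: "(\<Sum>k=1..d. cinner (badj (S k j) (app (F k 0) a)) b) = - cinner (app (adjoint (F 0 j)) a) b"
          by (simp add: Na cinner_minus_left cinner_sum_left)
        have e3: "cinner a (app (F 0 j) b) = cinner (app (adjoint (F 0 j)) a) b"
          by (metis adjoint_prop[OF aN b] cinner_commute)
        show ?thesis unfolding i0 a_def[symmetric] b_def[symmetric] using e1 e2 e3 by simp
      next
        case 3
        then have i1: "i \<in> {1..d}" and j0: "j = 0" by auto
        define a where "a = u i"
        define b where "b = u 0"
        have b: "b \<in> dom (F 0 0)" using uK[of 0] b_def by simp
        have a: "a \<in> dom (F 0 i)" using uK[of i] i KN[OF i1] a_def by auto
        have bN: "b \<in> dom (adjoint (F 0 i))" using stepA[OF b] i1 by blast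
        have Nb: "app (adjoint (F 0 i)) b = - (\<Sum>k=1..d. badj (S k i) (app (F k 0) b))"
          using stepA[OF b] i1 by blast
        have e1: "(\<Sum>k=1..d. cinner (app (F k i) a) (app (F k 0) b))
            = (\<Sum>k=1..d. cinner a (badj (S k i) (app (F k 0) b))) - cinner a (app (F i 0) b)"
        proof -
          have "(\<Sum>k=1..d. cinner (app (F k i) a) (app (F k 0) b))
              = (\<Sum>k=1..d. cinner a (badj (S k i) (app (F k 0) b)) - (if k = i then cinner a (app (F k 0) b) else 0))"
          proof (rule sum.cong[OF refl])
            fix k assume k: "k \<in> {1..d}"
            show "cinner (app (F k i) a) (app (F k 0) b) = cinner a (badj (S k i) (app (F k 0) b)) - (if k = i then cinner a (app (F k 0) b) else 0)"
              by (simp add: Fij_app[OF k i1] cinner_diff_left badj_prop[OF bS[OF k i1]])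
          qed
          also have "\<dots> = (\<Sum>k=1..d. cinner a (badj (S k i) (app (F k 0) b))) - cinner a (app (F i 0) b)"
            using i1 by (simp add: sum_subtractf)
          finally show ?thesis .
        qed
        have e2: "(\<Sum>k=1..d. cinner a (badj (S k i) (app (F k 0) b))) = - cinner a (app (adjoint (F 0 i)) b)"
          by (simp add: Nb cinner_minus_right cinner_sum_right)
        have e3: "cinner (app (F 0 i) a) b = cinner a (app (adjoint (F 0 i)) b)"
          by (rule adjoint_prop[OF bN a])
        show ?thesis unfolding j0 a_def[symmetric] b_def[symmetric] using e1 e2 e3 by simp
      next
        case 4
        then have i1: "i \<in> {1..d}" and j1: "j \<in> {1..d}" by auto
        define a where "a = u i"
        define b where "b = u j"
        have H: "(\<Sum>k=1..d. cinner (S k i a) (S k j b)) = (if i = j then cinner a b else 0)"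
        proof -
          have "(\<Sum>k=1..d. cinner (S k i a) (S k j b)) = (\<Sum>k=1..d. cinner a (badj (S k i) (S k j b)))"
            by (rule sum.cong[OF refl]) (simp add: badj_prop[OF bS[OF _ i1]])
          also have "\<dots> = cinner a (\<Sum>k=1..d. badj (S k i) (S k j b))" by (simp add: cinner_sum_right)
          also have "\<dots> = cinner a (if i = j then b else 0)" using C_ii_iso i1 j1 by simp
          finally show ?thesis by simp
        qed
        have sumeq: "(\<Sum>k=1..d. cinner (app (F k i) a) (app (F k j) b))
            = (\<Sum>k=1..d. cinner (S k i a - (if k = i then a else 0)) (S k j b - (if k = j then b else 0)))"
        proof (rule sum.cong[OF refl])
          fix k assume k: "k \<in> {1..d}"
          show "cinner (app (F k i) a) (app (F k j) b) = cinner (S k i a - (if k = i then a else 0)) (S k j b - (if k = j then b else 0))"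
            by (simp only: Fij_app[OF k i1] Fij_app[OF k j1])
        qed
        show ?thesis unfolding a_def[symmetric] b_def[symmetric] Fij_app[OF i1 j1] Fij_app[OF j1 i1] sumeq
          by (rule gen11[OF i1 j1 H])
      qed
    qed
    show "(\<Sum>i=0..d. \<Sum>j=0..d.
              cinner (u i) (app (F i j) (u j)) + cinner (app (F j i) (u i)) (u j)
            + (\<Sum>k=1..d. cinner (app (F k i) (u i)) (app (F k j) (u j)))) = 0"
      using trm by (intro sum.neutral ballI) simp
  qed
  have Fadj: "app (adjoint (F i j)) w = badj (S i j) w - (if i = j then w else 0)"
    if "i \<in> {1..d}" "j \<in> {1..d}" for i j w using Fij_adj[OF that] by blast
  have C5b: "\<forall>v::nat \<Rightarrow> 'a. (\<forall>i\<le>d. v i \<in> Dt) \<longrightarrow>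
          (\<Sum>i=0..d. \<Sum>j=0..d.
              cinner (v i) (app (adjoint (F j i)) (v j)) + cinner (app (adjoint (F i j)) (v i)) (v j)
            + (\<Sum>k=1..d. cinner (app (adjoint (F i k)) (v i)) (app (adjoint (F j k)) (v j)))) = 0"
  proof (intro allI impI)
    fix v :: "nat \<Rightarrow> 'a" assume vD: "\<forall>i\<le>d. v i \<in> Dt"
    have vK: "v i \<in> dom (adjoint (F 0 0))" if "i \<le> d" for i using vD that DtK by blast
    have trm: "cinner (v i) (app (adjoint (F j i)) (v j)) + cinner (app (adjoint (F i j)) (v i)) (v j)
            + (\<Sum>k=1..d. cinner (app (adjoint (F i k)) (v i)) (app (adjoint (F j k)) (v j))) = 0"
      if i: "i \<in> {0..d}" and j: "j \<in> {0..d}" for i j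
    proof -
      consider "i = 0 \<and> j = 0" | "i = 0 \<and> j \<in> {1..d}" | "i \<in> {1..d} \<and> j = 0" | "i \<in> {1..d} \<and> j \<in> {1..d}"
        using i j by fastforce
      then show ?thesis
      proof cases
        case 1
        define a where "a = v 0"
        have a: "a \<in> dom (adjoint (F 0 0))" using vK[of 0] a_def by simp
        have s1: "cinner a (app (adjoint (F 0 0)) a) + cinner (app (adjoint (F 0 0)) a) a
            = complex_of_real (2 * Re (cinner (app (adjoint (F 0 0)) a) a))"
          using complex_add_cnj[of "cinner (app (adjoint (F 0 0)) a) a"] cinner_commute[of a "app (adjoint (F 0 0)) a"]
          by (simp add: add.commute)
        have s2: "(\<Sum>k=1..d. cinner (app (adjoint (F 0 k)) a) (app (adjoint (F 0 k)) a))
            = complex_of_real (\<Sum>k=1..d. (norm (app (adjoint (F 0 k)) a))\<^sup>2)"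
          by (simp only: cinner_self of_real_sum)
        show ?thesis using 1 s1 s2 C2b a unfolding a_def by simp
      next
        case 2
        then have j1: "j \<in> {1..d}" and i0: "i = 0" by auto
        define a where "a = v 0"
        define b where "b = v j"
        have a: "a \<in> dom (adjoint (F 0 0))" using vK[of 0] a_def by simp
        have bRs: "b \<in> dom (adjoint (F j 0))" using DtR[OF j1] vD j b_def by auto
        have aR: "a \<in> dom (F j 0)" using stepB[OF a] j1 by blast
        have Ra: "app (F j 0) a = - (\<Sum>k=1..d. S j k (app (adjoint (F 0 k)) a))"
          using stepB[OF a] j1 by blast
        have e1: "(\<Sum>k=1..d. cinner (app (adjoint (F 0 k)) a) (app (adjoint (F j k)) b))
            = (\<Sum>k=1..d. cinner (S j k (app (adjoint (F 0 k)) a)) b) - cinner (app (adjoint (F 0 j)) a) b"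
        proof -
          have "(\<Sum>k=1..d. cinner (app (adjoint (F 0 k)) a) (app (adjoint (F j k)) b))
              = (\<Sum>k=1..d. cinner (S j k (app (adjoint (F 0 k)) a)) b - (if j = k then cinner (app (adjoint (F 0 k)) a) b else 0))"
          proof (rule sum.cong[OF refl])
            fix k assume k: "k \<in> {1..d}"
            show "cinner (app (adjoint (F 0 k)) a) (app (adjoint (F j k)) b) = cinner (S j k (app (adjoint (F 0 k)) a)) b - (if j = k then cinner (app (adjoint (F 0 k)) a) b else 0)"
              by (simp add: Fadj[OF j1 k] cinner_diff_right badj_prop[OF bS[OF j1 k]])
          qed
          also have "\<dots> = (\<Sum>k=1..d. cinner (S j k (app (adjoint (F 0 k)) a)) b) - cinner (app (adjoint (F 0 j)) a) b"
            using j1 by (simp add: sum_subtractf)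
          finally show ?thesis .
        qed
        have e2: "(\<Sum>k=1..d. cinner (S j k (app (adjoint (F 0 k)) a)) b) = - cinner (app (F j 0) a) b"
          by (simp add: Ra cinner_minus_left cinner_sum_left)
        have e3: "cinner a (app (adjoint (F j 0)) b) = cinner (app (F j 0) a) b"
          by (rule adjoint_prop[OF bRs aR, symmetric])
        show ?thesis unfolding i0 a_def[symmetric] b_def[symmetric] using e1 e2 e3 by simp
      next
        case 3
        then have i1: "i \<in> {1..d}" and j0: "j = 0" by auto
        define a where "a = v i"
        define b where "b = v 0"
        have b: "b \<in> dom (adjoint (F 0 0))" using vK[of 0] b_def by simp
        have aRs: "a \<in> dom (adjoint (F i 0))" using DtR[OF i1] vD i a_def by auto
        have bR: "b \<in> dom (F i 0)" using stepB[OF b] i1 by blast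
        have Rb: "app (F i 0) b = - (\<Sum>k=1..d. S i k (app (adjoint (F 0 k)) b))"
          using stepB[OF b] i1 by blast
        have e1: "(\<Sum>k=1..d. cinner (app (adjoint (F i k)) a) (app (adjoint (F 0 k)) b))
            = (\<Sum>k=1..d. cinner a (S i k (app (adjoint (F 0 k)) b))) - cinner a (app (adjoint (F 0 i)) b)"
        proof -
          have "(\<Sum>k=1..d. cinner (app (adjoint (F i k)) a) (app (adjoint (F 0 k)) b))
              = (\<Sum>k=1..d. cinner a (S i k (app (adjoint (F 0 k)) b)) - (if i = k then cinner a (app (adjoint (F 0 k)) b) else 0))"
          proof (rule sum.cong[OF refl])
            fix k assume k: "k \<in> {1..d}"
            show "cinner (app (adjoint (F i k)) a) (app (adjoint (F 0 k)) b) = cinner a (S i k (app (adjoint (F 0 k)) b)) - (if i = k then cinner a (app (adjoint (F 0 k)) b) else 0)"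
              by (simp add: Fadj[OF i1 k] cinner_diff_left badj_prop2[OF bS[OF i1 k]])
          qed
          also have "\<dots> = (\<Sum>k=1..d. cinner a (S i k (app (adjoint (F 0 k)) b))) - cinner a (app (adjoint (F 0 i)) b)"
            using i1 by (simp add: sum_subtractf)
          finally show ?thesis .
        qed
        have e2: "(\<Sum>k=1..d. cinner a (S i k (app (adjoint (F 0 k)) b))) = - cinner a (app (F i 0) b)"
          by (simp add: Rb cinner_minus_right cinner_sum_right)
        have e3: "cinner (app (adjoint (F i 0)) a) b = cinner a (app (F i 0) b)"
          by (metis adjoint_prop[OF aRs bR] cinner_commute)
        show ?thesis unfolding j0 a_def[symmetric] b_def[symmetric] using e1 e2 e3 by simp
      next
        case 4
        then have i1: "i \<in> {1..d}" and j1: "j \<in> {1..d}" by auto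
        define a where "a = v i"
        define b where "b = v j"
        have H: "(\<Sum>k=1..d. cinner (badj (S i k) a) (badj (S j k) b)) = (if i = j then cinner a b else 0)"
        proof -
          have "(\<Sum>k=1..d. cinner (badj (S i k) a) (badj (S j k) b)) = (\<Sum>k=1..d. cinner a (S i k (badj (S j k) b)))"
          proof (rule sum.cong[OF refl])
            fix k assume k: "k \<in> {1..d}"
            show "cinner (badj (S i k) a) (badj (S j k) b) = cinner a (S i k (badj (S j k) b))"
              by (rule badj_prop2[OF bS[OF i1 k], symmetric])
          qed
          also have "\<dots> = cinner a (\<Sum>k=1..d. S i k (badj (S j k) b))" by (simp add: cinner_sum_right)
          also have "\<dots> = cinner a (if i = j then b else 0)" using C_ii_coiso i1 j1 by simp
          finally show ?thesis by simp
        qed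
        have sumeq: "(\<Sum>k=1..d. cinner (app (adjoint (F i k)) a) (app (adjoint (F j k)) b))
            = (\<Sum>k=1..d. cinner (badj (S i k) a - (if i = k then a else 0)) (badj (S j k) b - (if j = k then b else 0)))"
        proof (rule sum.cong[OF refl])
          fix k assume k: "k \<in> {1..d}"
          show "cinner (app (adjoint (F i k)) a) (app (adjoint (F j k)) b) = cinner (badj (S i k) a - (if i = k then a else 0)) (badj (S j k) b - (if j = k then b else 0))"
            by (simp only: Fadj[OF i1 k] Fadj[OF j1 k])
        qed
        show ?thesis unfolding a_def[symmetric] b_def[symmetric] Fadj[OF i1 j1] Fadj[OF j1 i1] sumeq
          by (rule gen11b[where T = "\<lambda>k i. badj (S i k)", OF i1 j1 H])
      qed
    qed
    show "(\<Sum>i=0..d. \<Sum>j=0..d.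
              cinner (v i) (app (adjoint (F j i)) (v j)) + cinner (app (adjoint (F i j)) (v i)) (v j)
            + (\<Sum>k=1..d. cinner (app (adjoint (F i k)) (v i)) (app (adjoint (F j k)) (v j)))) = 0"
      using trm by (intro sum.neutral ballI) simp
  qed
  show ?thesis by (intro conjI C1 domF C2a C2b C3 C4 C5a C5b)
qed

end
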